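(* Let $p,q\ge0$, $n=p+q\ge1$. For every $M\in\mathcal{G}^{\mathbb{C}}_{p,q}$, $${\rm rank}(M)={\rm rank}(\widehat{M})={\rm rank}(\widetilde{M})={\rm rank}(\overline{M})={\rm rank}(M^\dagger)={\rm rank}(M^\dagger M)={\rm rank}(MM^\dagger).$$
   Context: Let $\mathcal{G}_{p,q}$ be the real Clifford algebra with identity $e$ and generators $e_1,\dots,e_n$ satisfying $e_ae_b+e_be_a=2\eta_{ab}e$, $\eta={\rm diag}(1,\dots,1,-1,\dots,-1)$ ($p$ ones, $q$ minus ones), basis elements $e_A=e_{a_1}\cdots e_{a_k}$ for $a_1<\dots<a_k$ (grade $k$), and $\mathcal{G}^{\mathbb{C}}_{p,q}=\mathbb{C}\otimes\mathcal{G}_{p,q}$ with elements $M=\sum_A m_Ae_A$, $m_A\in\mathbb{C}$. Let $\langle M\rangle_k$ be the projection onto the span of the grade-$k$ basis elements. Define the grade involution $\widehat{M}=\sum_k(-1)^k\langle M\rangle_k$, the reversion $\widetilde{M}=\sum_k(-1)^{k(k-1)/2}\langle M\rangle_k$, complex conjugation $\overline{M}=\sum_A\overline{m_A}e_A$, and Hermitian conjugation $M^\dagger=\sum_A\overline{m_A}(e_A)^{-1}$. Let $N=2^{\lfloor (n+1)/2\rfloor}$ and let $\beta$ be an algebra isomorphism from $\mathcal{G}^{\mathbb{C}}_{p,q}$ onto ${\rm Mat}(N,\mathbb{C})$ if $n$ is even, and onto the algebra of block-diagonal matrices ${\rm diag}(X,Y)$, $X,Y\in{\rm Mat}(N/2,\mathbb{C})$,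 if $n$ is odd. The rank is ${\rm rank}(M):={\rm rank}(\beta(M))$, independent of the choice of $\beta$. *)

theory Defs
  imports Complex_Main "Jordan_Normal_Form.DL_Rank"
begin

text \<open>Elements of the complexified Clifford algebra G^C_{p,q}, n = p + q, are represented by
  their coefficient families: M A = m_A for A a subset of {0..<n} (the basis element e_A is
  e_{a_1}...e_{a_k} with a_1 < ... < a_k the elements of A); coefficients outside are 0.
  Generator e_a (a < n) has square eta_a = 1 if a < p and -1 otherwise.\<close>

type_synonym cl = "nat set \<Rightarrow> complex"

definition cl_elems :: "nat \<Rightarrow> nat \<Rightarrow> cl set" where
  "cl_elems p q = {M. \<forall>A. \<not> A \<subseteq> {..<p+q} \<longrightarrow> M A = 0}"

definition cl_eta :: "nat \<Rightarrow> nat \<Rightarrow> complex" where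
  "cl_eta p a = (if a < p then 1 else -1)"

text \<open>e_A e_B = cl_sign p A B e_{A symmetric-difference B}\<close>
definition cl_sign :: "nat \<Rightarrow> nat set \<Rightarrow> nat set \<Rightarrow> complex" where
  "cl_sign p A B = (-1) ^ card {(a, b). a \<in> A \<and> b \<in> B \<and> b < a} * (\<Prod>a\<in>A \<inter> B. cl_eta p a)"

definition cl_basis :: "nat set \<Rightarrow> cl" where
  "cl_basis A = (\<lambda>C. if C = A then 1 else 0)"

definition cl_one :: cl where
  "cl_one = cl_basis {}"

definition cl_add :: "cl \<Rightarrow> cl \<Rightarrow> cl" where
  "cl_add M N = (\<lambda>A. M A + N A)"

definition cl_scale :: "complex \<Rightarrow> cl \<Rightarrow> cl" where
  "cl_scale c M = (\<lambda>A. c * M A)"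

definition cl_mult :: "nat \<Rightarrow> nat \<Rightarrow> cl \<Rightarrow> cl \<Rightarrow> cl" where
  "cl_mult p q M N = (\<lambda>C. if C \<subseteq> {..<p+q} then
      (\<Sum>A\<in>Pow {..<p+q}. \<Sum>B\<in>Pow {..<p+q}.
         if (A - B) \<union> (B - A) = C then cl_sign p A B * M A * N B else 0)
    else 0)"

definition cl_inv :: "nat \<Rightarrow> nat \<Rightarrow> cl \<Rightarrow> cl" where
  "cl_inv p q X = (THE Y. Y \<in> cl_elems p q \<and> cl_mult p q X Y = cl_one \<and> cl_mult p q Y X = cl_one)"

definition cl_grade :: "nat \<Rightarrow> cl \<Rightarrow> cl" where
  "cl_grade k M = (\<lambda>A. if card A = k then M A else 0)"

definition cl_hat :: "nat \<Rightarrow> nat \<Rightarrow> cl \<Rightarrow> cl" where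
  "cl_hat p q M = (\<lambda>B. \<Sum>k\<le>p+q. cl_scale ((-1) ^ k) (cl_grade k M) B)"

definition cl_rev :: "nat \<Rightarrow> nat \<Rightarrow> cl \<Rightarrow> cl" where
  "cl_rev p q M = (\<lambda>B. \<Sum>k\<le>p+q. cl_scale ((-1) ^ (k * (k - 1) div 2)) (cl_grade k M) B)"

definition cl_conj :: "cl \<Rightarrow> cl" where
  "cl_conj M = (\<lambda>A. cnj (M A))"

definition cl_dagger :: "nat \<Rightarrow> nat \<Rightarrow> cl \<Rightarrow> cl" where
  "cl_dagger p q M = (\<lambda>B. \<Sum>A\<in>Pow {..<p+q}. cl_scale (cnj (M A)) (cl_inv p q (cl_basis A)) B)"

definition cl_target :: "nat \<Rightarrow> complex mat set" where
  "cl_target n = (let N = 2 ^ ((n + 1) div 2) in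
     if even n then carrier_mat N N
     else {four_block_mat X (0\<^sub>m (N div 2) (N div 2)) (0\<^sub>m (N div 2) (N div 2)) Y | X Y.
             X \<in> carrier_mat (N div 2) (N div 2) \<and> Y \<in> carrier_mat (N div 2) (N div 2)})"

definition cl_iso :: "nat \<Rightarrow> nat \<Rightarrow> (cl \<Rightarrow> complex mat) \<Rightarrow> bool" where
  "cl_iso p q \<beta> \<longleftrightarrow>
     bij_betw \<beta> (cl_elems p q) (cl_target (p + q)) \<and>
     (\<forall>M\<in>cl_elems p q. \<forall>N\<in>cl_elems p q. \<beta> (cl_add M N) = \<beta> M + \<beta> N) \<and>
     (\<forall>M\<in>cl_elems p q. \<forall>c. \<beta> (cl_scale c M) = c \<cdot>\<^sub>m \<beta> M) \<and>
     (\<forall>M\<in>cl_elems p q. \<forall>N\<in>cl_elems p q. \<beta> (cl_mult p q M N) = \<beta> M * \<beta> N) \<and>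
     \<beta> cl_one = 1\<^sub>m (2 ^ ((p + q + 1) div 2))"

definition cmat_rank :: "complex mat \<Rightarrow> nat" where
  "cmat_rank A = vec_space.rank (dim_row A) (A :: complex mat)"

end

theory Submission
  imports Defs
begin


lemma mat_vec_unit:
  fixes C :: "'a::comm_ring_1 mat"
  assumes C: "C \<in> carrier_mat n k" and i: "i < k"
  shows "C *\<^sub>v unit_vec k i = col C i"
  by (rule eq_vecI) (use C i in \<open>auto simp: row_def col_def\<close>)

lemma mat_vec_unit_diff:
  fixes C :: "'a::comm_ring_1 mat"
  assumes C: "C \<in> carrier_mat n k" and i: "i < k" and j: "j < k"
  shows "C *\<^sub>v (unit_vec k i - unit_vec k j) = col C i - col C j"
  using mult_minus_distrib_mat_vec[OF C unit_vec_carrier unit_vec_carrier] mat_vec_unit[OF C i] mat_vec_unit[OF C j]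
  by simp

lemma (in vec_space) L0:
  assumes X: "(X::'a mat) \<in> carrier_mat n n" and W: "W \<in> carrier_mat n k"
    and ker: "\<And>v::'a vec. v \<in> carrier_vec k \<Longrightarrow> (X * W) *\<^sub>v v = 0\<^sub>v n \<Longrightarrow> v = 0\<^sub>v k"
  shows "k \<le> rank X"
proof -
  let ?C = "X * W"
  have C: "?C \<in> carrier_mat n k" using X W by simp
  have dist: "distinct (cols ?C)"
  proof (rule ccontr)
    assume "\<not> distinct (cols ?C)"
    then obtain i j where ij: "i < k" "j < k" "i \<noteq> j" "cols ?C ! i = cols ?C ! j"
      using distinct_conv_nth C by (metis carrier_matD(2) cols_length)
    define v :: "'a vec" where "v = unit_vec k i - unit_vec k j"
    have vc: "v \<in> carrier_vec k" unfolding v_def by simp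
    have "?C *\<^sub>v v = col ?C i - col ?C j" unfolding v_def by (rule mat_vec_unit_diff[OF C ij(1,2)])
    also have "\<dots> = 0\<^sub>v n"
    proof -
      have "col ?C i = col ?C j" using ij C by (metis carrier_matD(2) cols_nth)
      moreover have "col ?C j \<in> carrier_vec n" using C ij by simp
      ultimately show ?thesis by simp
    qed
    finally have "v = 0\<^sub>v k" using ker vc by blast
    then have "v $ i = 0" using ij by simp
    moreover have "v $ i = 1" unfolding v_def using ij by simp
    ultimately show False by simp
  qed
  have li: "lin_indpt (set (cols ?C))"
  proof (rule ccontr)
    assume "\<not> lin_indpt (set (cols ?C))"
    then obtain v :: "'a vec" where "v \<in> carrier_vec k" "v \<noteq> 0\<^sub>v k" "?C *\<^sub>v v = 0\<^sub>v n"
      using lin_depE[OF C _ dist] by blast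
    then show False using ker by blast
  qed
  have card: "card (set (cols ?C)) = k" using dist C W by (simp add: distinct_card)
  have sub: "set (cols ?C) \<subseteq> span (set (cols X))"
  proof
    fix y assume "y \<in> set (cols ?C)"
    then obtain i where i: "i < k" "y = col ?C i" using C by (metis cols_length cols_nth in_set_conv_nth carrier_matD(2))
    then have "y = X *\<^sub>v col W i" using col_mult2[OF X W i(1)] by simp
    moreover have "col W i \<in> carrier_vec n" using W i by simp
    ultimately have "y \<in> col_space X" using col_space_eq[OF X] X by auto
    then show "y \<in> span (set (cols X))" unfolding col_space_def .
  qed
  have colsX: "set (cols X) \<subseteq> carrier_vec n" using X cols_dim by blast
  have subm: "submodule class_ring (span (set (cols X))) V" using colsX by (simp add: span_is_submodule)
  have vs: "vectorspace class_ring (vs (span (set (cols X))))"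
    using span_is_subspace[THEN subspace_is_vs, OF colsX] by simp
  have fd: "vectorspace.fin_dim class_ring (vs (span (set (cols X))))" using fin_dim_span_cols[OF X] .
  have li2: "LinearCombinations.module.lin_indpt class_ring (vs (span (set (cols X)))) (set (cols ?C))"
    using span_li_not_depend(2)[OF sub subm] li by simp
  have "card (set (cols ?C)) \<le> vectorspace.dim class_ring (vs (span (set (cols X))))"
    using vectorspace.li_le_dim(2)[OF vs fd _ li2] sub by simp
  then show ?thesis unfolding rank_def card by simp
qed


definition bdc :: "nat \<Rightarrow> nat \<Rightarrow> complex mat set" where
  "bdc N c = {X \<in> carrier_mat N N. \<forall>i<N. \<forall>j<N. (c \<le> i) \<noteq> (c \<le> j) \<longrightarrow> X $$ (i,j) = 0}"

lemma bdc_carrier[simp]: "X \<in> bdc N c \<Longrightarrow> X \<in> carrier_mat N N"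
  unfolding bdc_def by auto

lemma bdc_dims[simp]: "X \<in> bdc N c \<Longrightarrow> dim_row X = N" "X \<in> bdc N c \<Longrightarrow> dim_col X = N"
  unfolding bdc_def by auto

lemma bdc_off: "X \<in> bdc N c \<Longrightarrow> i < N \<Longrightarrow> j < N \<Longrightarrow> (c \<le> i) \<noteq> (c \<le> j) \<Longrightarrow> X $$ (i,j) = 0"
  unfolding bdc_def by auto

lemma bdcI: "X \<in> carrier_mat N N \<Longrightarrow> (\<And>i j. i < N \<Longrightarrow> j < N \<Longrightarrow> (c \<le> i) \<noteq> (c \<le> j) \<Longrightarrow> X $$ (i,j) = 0) \<Longrightarrow> X \<in> bdc N c"
  unfolding bdc_def by auto

lemma bdc_mult[simp]:
  assumes X: "X \<in> bdc N c" and Y: "Y \<in> bdc N c"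
  shows "X * Y \<in> bdc N c"
proof (rule bdcI)
  show "X * Y \<in> carrier_mat N N" using mult_carrier_mat[OF bdc_carrier[OF X] bdc_carrier[OF Y]] .
  fix i j assume ij: "i < N" "j < N" "(c \<le> i) \<noteq> (c \<le> j)"
  have "(X * Y) $$ (i,j) = (\<Sum>l\<in>{0..<N}. X $$ (i,l) * Y $$ (l,j))"
    using X Y ij by (simp add: scalar_prod_def)
  also have "\<dots> = 0"
  proof (rule sum.neutral, intro ballI)
    fix l assume "l \<in> {0..<N}"
    then have l: "l < N" by simp
    show "X $$ (i,l) * Y $$ (l,j) = 0"
    proof (cases "(c \<le> i) = (c \<le> l)")
      case True
      then show ?thesis using bdc_off[OF Y l ij(2)] ij by simp
    next
      case False
      then show ?thesis using bdc_off[OF X ij(1) l] by simp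
    qed
  qed
  finally show "(X * Y) $$ (i,j) = 0" .
qed

lemma bdc_add[simp]: "X \<in> bdc N c \<Longrightarrow> Y \<in> bdc N c \<Longrightarrow> X + Y \<in> bdc N c"
  by (rule bdcI) (auto simp: bdc_off)

lemma bdc_minus[simp]: "X \<in> bdc N c \<Longrightarrow> Y \<in> bdc N c \<Longrightarrow> X - Y \<in> bdc N c"
  by (rule bdcI) (auto simp: bdc_off)

lemma bdc_one[simp]: "1\<^sub>m N \<in> bdc N c"
  by (rule bdcI) auto

lemma bdc_zero[simp]: "0\<^sub>m N N \<in> bdc N c"
  by (rule bdcI) auto

definition famR :: "nat \<Rightarrow> nat \<Rightarrow> complex mat \<Rightarrow> nat \<Rightarrow> (nat \<Rightarrow> complex mat) \<Rightarrow> bool" where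
  "famR N c X k Es \<longleftrightarrow> (\<forall>i<k. Es i \<in> bdc N c \<and> Es i \<noteq> 0\<^sub>m N N \<and> (\<exists>Y\<in>bdc N c. Es i = X * Y) \<and>
      (\<forall>j<k. Es i * Es j = (if i = j then Es i else 0\<^sub>m N N)))"

definition famL :: "nat \<Rightarrow> nat \<Rightarrow> complex mat \<Rightarrow> nat \<Rightarrow> (nat \<Rightarrow> complex mat) \<Rightarrow> bool" where
  "famL N c X k Es \<longleftrightarrow> (\<forall>i<k. Es i \<in> bdc N c \<and> Es i \<noteq> 0\<^sub>m N N \<and> (\<exists>Y\<in>bdc N c. Es i = Y * X) \<and>
      (\<forall>j<k. Es i * Es j = (if i = j then Es i else 0\<^sub>m N N)))"

lemma mat_col_select:
  fixes F :: "complex mat"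
  assumes F: "F \<in> carrier_mat N N" and G: "\<And>i. i < k \<Longrightarrow> G i \<in> carrier_mat N N"
    and m: "\<And>i. i < k \<Longrightarrow> m i < N"
  shows "F * mat N k (\<lambda>(r,i). G i $$ (r, m i)) = mat N k (\<lambda>(s,i). (F * G i) $$ (s, m i))"
proof (rule eq_matI)
  fix s i assume si: "s < dim_row (mat N k (\<lambda>(s,i). (F * G i) $$ (s, m i)))"
     "i < dim_col (mat N k (\<lambda>(s,i). (F * G i) $$ (s, m i)))"
  then have s: "s < N" and i: "i < k" by auto
  have "col (mat N k (\<lambda>(r,i). G i $$ (r, m i))) i = col (G i) (m i)"
    using G[OF i] m[OF i] i by (auto intro!: eq_vecI)
  then show "(F * mat N k (\<lambda>(r,i). G i $$ (r, m i))) $$ (s, i) = mat N k (\<lambda>(s,i). (F * G i) $$ (s, m i)) $$ (s, i)"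
    using F G[OF i] m[OF i] s i by simp
qed (use F in auto)

lemma famR_le_rank:
  assumes X: "X \<in> carrier_mat N N" and fam: "famR N c X k Es"
  shows "k \<le> vec_space.rank N X"
proof -
  have "\<forall>i. \<exists>Y. i < k \<longrightarrow> Y \<in> bdc N c \<and> Es i = X * Y" using fam unfolding famR_def by blast
  then obtain Ys where Ys: "\<And>i. i < k \<Longrightarrow> Ys i \<in> bdc N c \<and> Es i = X * Ys i" by metis
  have "\<forall>i. \<exists>rm. i < k \<longrightarrow> fst rm < N \<and> snd rm < N \<and> Es i $$ (fst rm, snd rm) \<noteq> 0"
  proof (intro allI)
    fix i show "\<exists>rm. i < k \<longrightarrow> fst rm < N \<and> snd rm < N \<and> Es i $$ (fst rm, snd rm) \<noteq> 0"
    proof (cases "i < k")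
      case True
      then have E: "Es i \<in> carrier_mat N N" "Es i \<noteq> 0\<^sub>m N N" using fam unfolding famR_def by auto
      have "\<exists>r s. r < N \<and> s < N \<and> Es i $$ (r, s) \<noteq> 0"
      proof (rule ccontr)
        assume "\<not> ?thesis"
        then have "Es i = 0\<^sub>m N N" using E(1) by (intro eq_matI) auto
        then show False using E(2) by simp
      qed
      then show ?thesis by auto
    qed simp
  qed
  then obtain rm where rm: "\<And>i. i < k \<Longrightarrow> fst (rm i) < N \<and> snd (rm i) < N \<and> Es i $$ (fst (rm i), snd (rm i)) \<noteq> 0"
    by metis
  define m where "m i = snd (rm i)" for i
  define W where "W = mat N k (\<lambda>(r,i). Ys i $$ (r, m i))"
  have m: "\<And>i. i < k \<Longrightarrow> m i < N" using rm m_def by auto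
  have W: "W \<in> carrier_mat N k" unfolding W_def by simp
  have Ysc: "\<And>i. i < k \<Longrightarrow> Ys i \<in> carrier_mat N N" using Ys bdc_carrier by blast
  have Esc: "\<And>i. i < k \<Longrightarrow> Es i \<in> carrier_mat N N" using fam unfolding famR_def by auto
  have "X * W = mat N k (\<lambda>(s,i). (X * Ys i) $$ (s, m i))"
    unfolding W_def by (rule mat_col_select[OF X Ysc m])
  also have "\<dots> = mat N k (\<lambda>(s,i). Es i $$ (s, m i))"
    using Ys by (intro eq_matI) auto
  finally have XW: "X * W = mat N k (\<lambda>(s,i). Es i $$ (s, m i))" .
  interpret vec_space "TYPE(complex)" N .
  show ?thesis
  proof (rule L0[OF X W])
    fix v :: "complex vec" assume v: "v \<in> carrier_vec k" and z: "X * W *\<^sub>v v = 0\<^sub>v N"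
    show "v = 0\<^sub>v k"
    proof (rule eq_vecI)
      fix j assume "j < dim_vec (0\<^sub>v k)"
      then have j: "j < k" by simp
      have "Es j * (X * W) = mat N k (\<lambda>(s,i). (Es j * Es i) $$ (s, m i))"
        unfolding XW using mat_col_select[OF Esc[OF j] Esc m] by simp
      also have "\<dots> = mat N k (\<lambda>(s,i). if i = j then Es j $$ (s, m j) else 0)"
        using fam j m unfolding famR_def by (intro eq_matI) auto
      finally have EC: "Es j * (X * W) = mat N k (\<lambda>(s,i). if i = j then Es j $$ (s, m j) else 0)" .
      have "(Es j * (X * W)) *\<^sub>v v = Es j *\<^sub>v (X * W *\<^sub>v v)"
        using assoc_mult_mat_vec[OF Esc[OF j] mult_carrier_mat[OF X W] v] .
      also have "\<dots> = 0\<^sub>v N" unfolding z using Esc[OF j] by (intro eq_vecI) (auto simp: scalar_prod_def)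
      finally have Z: "(Es j * (X * W)) *\<^sub>v v = 0\<^sub>v N" .
      define r where "r = fst (rm j)"
      have r: "r < N" using rm[OF j] r_def by simp
      have "((Es j * (X * W)) *\<^sub>v v) $ r = (\<Sum>i\<in>{0..<k}. (if i = j then Es j $$ (r, m j) else 0) * v $ i)"
        unfolding EC using r v by (simp add: scalar_prod_def)
      also have "\<dots> = Es j $$ (r, m j) * v $ j"
        using j by (subst sum.cong[OF refl, where h="\<lambda>i. if i = j then Es j $$ (r, m j) * v $ i else 0"]) auto
      finally have "Es j $$ (r, m j) * v $ j = 0" using Z r by simp
      moreover have "Es j $$ (r, m j) \<noteq> 0" using rm[OF j] r_def m_def by simp
      ultimately show "v $ j = 0\<^sub>v k $ j" using j by simp
    qed (use v in simp)
  qed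
qed


lemma sum_if_left: "(a::nat) < N \<Longrightarrow> (\<Sum>l\<in>{0..<N}. (if l = a then u else 0) * (w l :: 'a::comm_semiring_1)) = u * w a"
  by (subst sum.cong[OF refl, where h="\<lambda>l. if l = a then u * w l else 0"]) (auto simp: sum.delta)

lemma sum_if_right: "(a::nat) < N \<Longrightarrow> (\<Sum>l\<in>{0..<N}. (w l :: 'a::comm_semiring_1) * (if l = a then u else 0)) = w a * u"
  by (subst sum.cong[OF refl, where h="\<lambda>l. if l = a then w l * u else 0"]) (auto simp: sum.delta)

lemma add_minus_cancel_mat:
  fixes A B :: "'a::ab_group_add mat"
  assumes "A \<in> carrier_mat n m" "B \<in> carrier_mat n m"
  shows "A + (B - A) = B"
  using assms by (intro eq_matI) auto

lemma minus_zero_mat'[simp]: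
  fixes A :: "'a::ab_group_add mat"
  shows "A \<in> carrier_mat n m \<Longrightarrow> A - 0\<^sub>m n m = A"
  by (intro eq_matI) auto

lemma nonzero_entry:
  assumes "X \<in> carrier_mat N N" "X \<noteq> 0\<^sub>m N N"
  shows "\<exists>a b. a < N \<and> b < N \<and> X $$ (a,b) \<noteq> 0"
proof (rule ccontr)
  assume "\<not> ?thesis"
  then have "X = 0\<^sub>m N N" using assms(1) by (intro eq_matI) auto
  then show False using assms(2) by simp
qed

lemma pivot:
  assumes X: "X \<in> bdc N c" and nz: "X \<noteq> 0\<^sub>m N N"
  shows "\<exists>Y\<in>bdc N c. (X*Y)*(X*Y) = X*Y \<and> X*Y \<noteq> 0\<^sub>m N N \<and> vec_space.rank N (X*Y*X) \<le> 1"
proof -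
  have Xc: "X \<in> carrier_mat N N" using X by simp
  obtain a b where ab: "a < N" "b < N" "X $$ (a,b) \<noteq> 0" using nonzero_entry[OF Xc nz] by blast
  define x where "x = X $$ (a,b)"
  have x: "x \<noteq> 0" using ab x_def by simp
  have cab: "(c \<le> a) = (c \<le> b)" using bdc_off[OF X ab(1,2)] ab(3) by blast
  define Y where "Y = mat N N (\<lambda>(i,j). if i = b \<and> j = a then inverse x else 0)"
  have Y: "Y \<in> bdc N c" unfolding Y_def by (rule bdcI) (use cab in auto)
  have Yc: "Y \<in> carrier_mat N N" using Y by simp
  have E: "X * Y = mat N N (\<lambda>(i,j). if j = a then X $$ (i,b) * inverse x else 0)"
  proof (rule eq_matI)
    fix i j assume ij: "i < dim_row (mat N N (\<lambda>(i,j). if j = a then X $$ (i,b) * inverse x else 0))"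
      "j < dim_col (mat N N (\<lambda>(i,j). if j = a then X $$ (i,b) * inverse x else 0))"
    then have i: "i < N" and j: "j < N" by auto
    have "(X * Y) $$ (i,j) = (\<Sum>l\<in>{0..<N}. X $$ (i,l) * Y $$ (l,j))"
      using Xc Yc i j by (simp add: scalar_prod_def)
    also have "\<dots> = (\<Sum>l\<in>{0..<N}. X $$ (i,l) * (if l = b then (if j = a then inverse x else 0) else 0))"
      unfolding Y_def using j by (intro sum.cong) auto
    also have "\<dots> = X $$ (i,b) * (if j = a then inverse x else 0)" by (rule sum_if_right[OF ab(2)])
    finally show "(X * Y) $$ (i,j) = mat N N (\<lambda>(i,j). if j = a then X $$ (i,b) * inverse x else 0) $$ (i,j)"
      using i j by simp
  qed (use Xc Yc in auto)
  have EE: "(X*Y)*(X*Y) = X*Y"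
  proof (rule eq_matI)
    fix i j assume ij: "i < dim_row (X*Y)" "j < dim_col (X*Y)"
    then have i: "i < N" and j: "j < N" using Xc Yc by auto
    have "((X*Y)*(X*Y)) $$ (i,j) = (\<Sum>l\<in>{0..<N}. (X*Y) $$ (i,l) * (X*Y) $$ (l,j))"
      using Xc Yc i j by (simp add: scalar_prod_def)
    also have "\<dots> = (\<Sum>l\<in>{0..<N}. (if l = a then X $$ (i,b) * inverse x else 0) * (if j = a then X $$ (l,b) * inverse x else 0))"
      unfolding E using i j by (intro sum.cong) auto
    also have "\<dots> = X $$ (i,b) * inverse x * (if j = a then X $$ (a,b) * inverse x else 0)" by (rule sum_if_left[OF ab(1)])
    also have "\<dots> = (X*Y) $$ (i,j)" unfolding E using i j x x_def by simp
    finally show "((X*Y)*(X*Y)) $$ (i,j) = (X*Y) $$ (i,j)" .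
  qed (use Xc Yc in auto)
  have NZ: "X*Y \<noteq> 0\<^sub>m N N"
  proof
    assume "X*Y = 0\<^sub>m N N"
    then have "(X*Y) $$ (a,a) = 0" using ab by simp
    moreover have "(X*Y) $$ (a,a) = 1" unfolding E using ab x x_def by simp
    ultimately show False by simp
  qed
  have EX: "X*Y*X = mat N N (\<lambda>(i,j). (X $$ (i,b) * inverse x) * X $$ (a,j))"
  proof (rule eq_matI)
    fix i j assume ij: "i < dim_row (mat N N (\<lambda>(i,j). (X $$ (i,b) * inverse x) * X $$ (a,j)))"
      "j < dim_col (mat N N (\<lambda>(i,j). (X $$ (i,b) * inverse x) * X $$ (a,j)))"
    then have i: "i < N" and j: "j < N" by auto
    have "(X*Y*X) $$ (i,j) = (mat N N (\<lambda>(i,j). if j = a then X $$ (i,b) * inverse x else 0) * X) $$ (i,j)"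
      by (simp only: E)
    also have "\<dots> = (\<Sum>l\<in>{0..<N}. (if l = a then X $$ (i,b) * inverse x else 0) * X $$ (l,j))"
      using Xc i j by (simp add: scalar_prod_def)
    also have "\<dots> = X $$ (i,b) * inverse x * X $$ (a,j)" by (rule sum_if_left[OF ab(1)])
    finally show "(X*Y*X) $$ (i,j) = mat N N (\<lambda>(i,j). (X $$ (i,b) * inverse x) * X $$ (a,j)) $$ (i,j)"
      using i j by simp
  qed (use Xc Yc in auto)
  have R: "vec_space.rank N (X*Y*X) \<le> 1"
    by (rule vec_space.rank_le_1_product_entries[where f="\<lambda>i. X $$ (i,b) * inverse x" and g="\<lambda>j. X $$ (a,j)" and nc=N])
       (use Xc Yc in \<open>auto simp: EX\<close>)
  show ?thesis using Y EE NZ R by blast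
qed

lemma famA_aux:
  shows "X \<in> bdc N c \<Longrightarrow> k \<le> vec_space.rank N X \<Longrightarrow> \<exists>Es. famR N c X k Es"
proof (induction k arbitrary: X)
  case 0
  show ?case unfolding famR_def by auto
next
  case (Suc k)
  note X = Suc.prems(1)
  have Xc: "X \<in> carrier_mat N N" using X by simp
  have nz: "X \<noteq> 0\<^sub>m N N"
  proof
    assume "X = 0\<^sub>m N N"
    then have "vec_space.rank N X = 0" using vec_space.rank_0I by metis
    then show False using Suc.prems(2) by simp
  qed
  obtain Y where Y: "Y \<in> bdc N c" "(X*Y)*(X*Y) = X*Y" "X*Y \<noteq> 0\<^sub>m N N" "vec_space.rank N (X*Y*X) \<le> 1"
    using pivot[OF X nz] by blast
  define E where "E = X * Y"
  define X' where "X' = X - E * X"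
  define I where "I = (1\<^sub>m N :: complex mat)"
  have E: "E \<in> bdc N c" unfolding E_def using X Y by simp
  have X': "X' \<in> bdc N c" unfolding X'_def using X E by simp
  have I: "I \<in> bdc N c" unfolding I_def by simp
  have Ec: "E \<in> carrier_mat N N" and X'c: "X' \<in> carrier_mat N N" and Yc: "Y \<in> carrier_mat N N"
    and Ic: "I \<in> carrier_mat N N" using E X' Y I by auto
  have EXc: "E * X \<in> carrier_mat N N" using Ec Xc by simp
  define J where "J = I - E"
  have sumX: "X = E * X + X'"
    unfolding X'_def using add_minus_cancel_mat[OF EXc Xc] by simp
  have "vec_space.rank N X \<le> vec_space.rank N (E * X) + vec_space.rank N X'"
    using vec_space.rank_subadditive[OF EXc X'c] sumX by simp
  moreover have "vec_space.rank N (E * X) \<le> 1" using Y(4) E_def by simp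
  ultimately have "k \<le> vec_space.rank N X'" using Suc.prems(2) by simp
  then obtain Es' where fam': "famR N c X' k Es'" using Suc.IH[OF X'] by blast
  have "\<forall>i. \<exists>Z. i < k \<longrightarrow> Z \<in> bdc N c \<and> Es' i = X' * Z" using fam' unfolding famR_def by blast
  then obtain Ys where Ys: "\<And>i. i < k \<Longrightarrow> Ys i \<in> bdc N c \<and> Es' i = X' * Ys i" by metis
  have Es'b: "\<And>i. i < k \<Longrightarrow> Es' i \<in> bdc N c" and Es'nz: "\<And>i. i < k \<Longrightarrow> Es' i \<noteq> 0\<^sub>m N N"
    and Es'o: "\<And>i j. i < k \<Longrightarrow> j < k \<Longrightarrow> Es' i * Es' j = (if i = j then Es' i else 0\<^sub>m N N)"
    using fam' unfolding famR_def by auto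
  have Es'c: "\<And>i. i < k \<Longrightarrow> Es' i \<in> carrier_mat N N" using Es'b bdc_carrier by blast
  have Ysc: "\<And>i. i < k \<Longrightarrow> Ys i \<in> carrier_mat N N" using Ys bdc_carrier by blast
  have IEc: "J \<in> carrier_mat N N" unfolding J_def using Ec Ic minus_carrier_mat by blast
  have EE: "E * E = E" using Y(2) E_def by simp
  have f1: "E * J = 0\<^sub>m N N"
  proof -
    have "E * (I - E) = E * I - E * E" by (rule mult_minus_distrib_mat[OF Ec Ic Ec])
    then show ?thesis unfolding J_def using EE Ec by (simp add: I_def)
  qed
  have f2: "J * E = 0\<^sub>m N N"
  proof -
    have "(I - E) * E = I * E - E * E" by (rule minus_mult_distrib_mat[OF Ic Ec Ec])
    then show ?thesis unfolding J_def using EE Ec by (simp add: I_def)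
  qed
  have X'eq: "X' = J * X"
    unfolding X'_def J_def using minus_mult_distrib_mat[OF Ic Ec Xc] Xc by (simp add: I_def)
  have f3: "\<And>i. i < k \<Longrightarrow> E * Es' i = 0\<^sub>m N N"
  proof -
    fix i assume i: "i < k"
    have "E * Es' i = E * (J * (X * Ys i))" using Ys[OF i] X'eq IEc Xc Ysc[OF i] by simp
    also have "\<dots> = (E * J) * (X * Ys i)"
      by (rule assoc_mult_mat[OF Ec IEc mult_carrier_mat[OF Xc Ysc[OF i]], symmetric])
    also have "\<dots> = 0\<^sub>m N N" unfolding f1 using Xc Ysc[OF i] by simp
    finally show "E * Es' i = 0\<^sub>m N N" .
  qed
  have f4: "\<And>i. i < k \<Longrightarrow> J * Es' i = Es' i"
  proof -
    fix i assume i: "i < k"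
    have "(I - E) * Es' i = I * Es' i - E * Es' i" using minus_mult_distrib_mat[OF Ic Ec Es'c[OF i]] .
    then show "J * Es' i = Es' i" unfolding J_def using f3[OF i] Es'c[OF i] by (simp add: I_def)
  qed
  have IEb: "J \<in> bdc N c" unfolding J_def using I E by simp
  define Es where "Es i = (if i = 0 then E else Es' (i - 1) * J)" for i
  show ?case
    unfolding famR_def
  proof (intro exI[of _ Es] allI impI conjI)
    fix i assume i: "i < Suc k"
    show "Es i \<in> bdc N c" unfolding Es_def using E Es'b IEb i by auto
    show "Es i \<noteq> 0\<^sub>m N N"
    proof (cases "i = 0")
      case True then show ?thesis unfolding Es_def E_def using Y(3) by simp
    next
      case False
      define i' where "i' = i - 1"
      have i': "i' < k" using i False i'_def by simp
      have "Es i * Es' i' = Es' i' * (J * Es' i')"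
        unfolding Es_def using False i'_def Es'c[OF i'] IEc by simp
      also have "\<dots> = Es' i'" using f4[OF i'] Es'o[OF i' i'] by simp
      finally have eq: "Es i * Es' i' = Es' i'" .
      show ?thesis
      proof
        assume "Es i = 0\<^sub>m N N"
        then have "Es i * Es' i' = 0\<^sub>m N N" using Es'c[OF i'] by simp
        then show False using eq Es'nz[OF i'] by simp
      qed
    qed
    show "\<exists>Z\<in>bdc N c. Es i = X * Z"
    proof (cases "i = 0")
      case True then show ?thesis unfolding Es_def E_def using Y(1) by auto
    next
      case False
      define i' where "i' = i - 1"
      have i': "i' < k" using i False i'_def by simp
      define Z where "Z = (Ys i' - Y * (X * Ys i')) * J"
      have Zb: "Z \<in> bdc N c" unfolding Z_def using Ys[OF i'] Y(1) X IEb by simp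
      have YXc: "Y * (X * Ys i') \<in> carrier_mat N N" using Yc Xc Ysc[OF i'] by simp
      have "X * Z = X * (Ys i' - Y * (X * Ys i')) * J"
        unfolding Z_def by (rule assoc_mult_mat[OF Xc minus_carrier_mat[OF YXc] IEc, symmetric])
      also have "X * (Ys i' - Y * (X * Ys i')) = X * Ys i' - X * (Y * (X * Ys i'))"
        by (rule mult_minus_distrib_mat[OF Xc Ysc[OF i'] YXc])
      also have "X * (Y * (X * Ys i')) = E * X * Ys i'"
        unfolding E_def by (simp only: assoc_mult_mat[OF mult_carrier_mat[OF Xc Yc] Xc Ysc[OF i']]
            assoc_mult_mat[OF Xc Yc mult_carrier_mat[OF Xc Ysc[OF i']]])
      also have "X * Ys i' - E * X * Ys i' = X' * Ys i'"
        unfolding X'_def using minus_mult_distrib_mat[OF Xc EXc Ysc[OF i']] by (rule sym)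
      also have "X' * Ys i' = Es' i'" using Ys[OF i'] by simp
      finally have "X * Z = Es i" unfolding Es_def using False i'_def by simp
      then have "Es i = X * Z" by (rule sym)
      then show ?thesis using Zb by blast
    qed
    fix j assume j: "j < Suc k"
    show "Es i * Es j = (if i = j then Es i else 0\<^sub>m N N)"
    proof (cases "i = 0"; cases "j = 0")
      assume "i = 0" "j = 0" then show ?thesis unfolding Es_def using EE by simp
    next
      assume ij: "i = 0" "j \<noteq> 0"
      define j' where "j' = j - 1"
      have j': "j' < k" using j ij j'_def by simp
      have "Es i * Es j = E * (Es' j' * J)" unfolding Es_def using ij j'_def by simp
      also have "\<dots> = (E * Es' j') * J" using Ec Es'c[OF j'] IEc by simp
      also have "\<dots> = 0\<^sub>m N N" using f3[OF j'] IEc by simp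
      finally show ?thesis using ij by simp
    next
      assume ij: "i \<noteq> 0" "j = 0"
      define i' where "i' = i - 1"
      have i': "i' < k" using i ij i'_def by simp
      have "Es i * Es j = (Es' i' * J) * E" unfolding Es_def using ij i'_def by simp
      also have "\<dots> = Es' i' * (J * E)" using Ec Es'c[OF i'] IEc by simp
      also have "\<dots> = 0\<^sub>m N N" using f2 Es'c[OF i'] by simp
      finally show ?thesis using ij by simp
    next
      assume ij: "i \<noteq> 0" "j \<noteq> 0"
      define i' where "i' = i - 1"
      define j' where "j' = j - 1"
      have i': "i' < k" using i ij i'_def by simp
      have j': "j' < k" using j ij j'_def by simp
      have "Es i * Es j = (Es' i' * J) * (Es' j' * J)" unfolding Es_def using ij i'_def j'_def by simp
      also have "\<dots> = Es' i' * (J * Es' j') * J"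
        using assoc_mult_mat[OF Es'c[OF i'] IEc mult_carrier_mat[OF Es'c[OF j'] IEc]]
          assoc_mult_mat[OF Es'c[OF i'] mult_carrier_mat[OF IEc Es'c[OF j']] IEc]
          assoc_mult_mat[OF IEc Es'c[OF j'] IEc] by simp
      also have "\<dots> = (Es' i' * Es' j') * J" using f4[OF j'] by simp
      also have "\<dots> = (if i' = j' then Es' i' * J else 0\<^sub>m N N)" using Es'o[OF i' j'] IEc by simp
      finally show ?thesis unfolding Es_def using ij i'_def j'_def by auto
    qed
  qed
qed

lemma famA:
  assumes "X \<in> bdc N c"
  shows "\<exists>Es. famR N c X (vec_space.rank N X) Es"
  using famA_aux[OF assms order_refl] .


lemma famR_W:
  assumes X: "X \<in> carrier_mat N N" and fam: "famR N c X k Es"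
  shows "\<exists>W\<in>carrier_mat N k. \<forall>v\<in>carrier_vec k. (X * W) *\<^sub>v v = 0\<^sub>v N \<longrightarrow> v = 0\<^sub>v k"
proof -
  have "\<forall>i. \<exists>Y. i < k \<longrightarrow> Y \<in> bdc N c \<and> Es i = X * Y" using fam unfolding famR_def by blast
  then obtain Ys where Ys: "\<And>i. i < k \<Longrightarrow> Ys i \<in> bdc N c \<and> Es i = X * Ys i" by metis
  have "\<forall>i. \<exists>rm. i < k \<longrightarrow> fst rm < N \<and> snd rm < N \<and> Es i $$ (fst rm, snd rm) \<noteq> 0"
  proof (intro allI)
    fix i show "\<exists>rm. i < k \<longrightarrow> fst rm < N \<and> snd rm < N \<and> Es i $$ (fst rm, snd rm) \<noteq> 0"
    proof (cases "i < k")
      case True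
      then have E: "Es i \<in> carrier_mat N N" "Es i \<noteq> 0\<^sub>m N N" using fam unfolding famR_def by auto
      have "\<exists>r s. r < N \<and> s < N \<and> Es i $$ (r, s) \<noteq> 0"
      proof (rule ccontr)
        assume "\<not> ?thesis"
        then have "Es i = 0\<^sub>m N N" using E(1) by (intro eq_matI) auto
        then show False using E(2) by simp
      qed
      then show ?thesis by auto
    qed simp
  qed
  then obtain rm where rm: "\<And>i. i < k \<Longrightarrow> fst (rm i) < N \<and> snd (rm i) < N \<and> Es i $$ (fst (rm i), snd (rm i)) \<noteq> 0"
    by metis
  define m where "m i = snd (rm i)" for i
  define W where "W = mat N k (\<lambda>(r,i). Ys i $$ (r, m i))"
  have m: "\<And>i. i < k \<Longrightarrow> m i < N" using rm m_def by auto
  have W: "W \<in> carrier_mat N k" unfolding W_def by simp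
  have Ysc: "\<And>i. i < k \<Longrightarrow> Ys i \<in> carrier_mat N N" using Ys bdc_carrier by blast
  have Esc: "\<And>i. i < k \<Longrightarrow> Es i \<in> carrier_mat N N" using fam unfolding famR_def by auto
  have "X * W = mat N k (\<lambda>(s,i). (X * Ys i) $$ (s, m i))"
    unfolding W_def by (rule mat_col_select[OF X Ysc m])
  also have "\<dots> = mat N k (\<lambda>(s,i). Es i $$ (s, m i))"
    using Ys by (intro eq_matI) auto
  finally have XW: "X * W = mat N k (\<lambda>(s,i). Es i $$ (s, m i))" .
  have "\<forall>v\<in>carrier_vec k. (X * W) *\<^sub>v v = 0\<^sub>v N \<longrightarrow> v = 0\<^sub>v k"
  proof (intro ballI impI)
    fix v :: "complex vec" assume v: "v \<in> carrier_vec k" and z: "X * W *\<^sub>v v = 0\<^sub>v N"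
    show "v = 0\<^sub>v k"
    proof (rule eq_vecI)
      fix j assume "j < dim_vec (0\<^sub>v k)"
      then have j: "j < k" by simp
      have "Es j * (X * W) = mat N k (\<lambda>(s,i). (Es j * Es i) $$ (s, m i))"
        unfolding XW using mat_col_select[OF Esc[OF j] Esc m] by simp
      also have "\<dots> = mat N k (\<lambda>(s,i). if i = j then Es j $$ (s, m j) else 0)"
        using fam j m unfolding famR_def by (intro eq_matI) auto
      finally have EC: "Es j * (X * W) = mat N k (\<lambda>(s,i). if i = j then Es j $$ (s, m j) else 0)" .
      have "(Es j * (X * W)) *\<^sub>v v = Es j *\<^sub>v (X * W *\<^sub>v v)"
        using assoc_mult_mat_vec[OF Esc[OF j] mult_carrier_mat[OF X W] v] .
      also have "\<dots> = 0\<^sub>v N" unfolding z using Esc[OF j] by (intro eq_vecI) (auto simp: scalar_prod_def)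
      finally have Z: "(Es j * (X * W)) *\<^sub>v v = 0\<^sub>v N" .
      define r where "r = fst (rm j)"
      have r: "r < N" using rm[OF j] r_def by simp
      have "((Es j * (X * W)) *\<^sub>v v) $ r = (\<Sum>i\<in>{0..<k}. (if i = j then Es j $$ (r, m j) else 0) * v $ i)"
        unfolding EC using r v by (simp add: scalar_prod_def)
      also have "\<dots> = Es j $$ (r, m j) * v $ j"
        using j by (subst sum.cong[OF refl, where h="\<lambda>i. if i = j then Es j $$ (r, m j) * v $ i else 0"]) auto
      finally have "Es j $$ (r, m j) * v $ j = 0" using Z r by simp
      moreover have "Es j $$ (r, m j) \<noteq> 0" using rm[OF j] r_def m_def by simp
      ultimately show "v $ j = 0\<^sub>v k $ j" using j by simp
    qed (use v in simp)
  qed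
  then show ?thesis using W by blast
qed

lemma bassoc[simp]: "A \<in> bdc N c \<Longrightarrow> B \<in> bdc N c \<Longrightarrow> C \<in> bdc N c \<Longrightarrow> A * B * C = A * (B * C)"
  by (rule assoc_mult_mat[OF bdc_carrier bdc_carrier bdc_carrier])

lemma famL_famR:
  assumes X: "X \<in> bdc N c" and fam: "famL N c X k Es"
  shows "\<exists>Fs. famR N c X k Fs"
proof -
  have "\<forall>i. \<exists>Y. i < k \<longrightarrow> Y \<in> bdc N c \<and> Es i = Y * X" using fam unfolding famL_def by blast
  then obtain Ys where Ys: "\<And>i. i < k \<Longrightarrow> Ys i \<in> bdc N c" "\<And>i. i < k \<Longrightarrow> Es i = Ys i * X" by metis
  have Eb: "\<And>i. i < k \<Longrightarrow> Es i \<in> bdc N c" and Enz: "\<And>i. i < k \<Longrightarrow> Es i \<noteq> 0\<^sub>m N N"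
    and Eo: "\<And>i j. i < k \<Longrightarrow> j < k \<Longrightarrow> Es i * Es j = (if i = j then Es i else 0\<^sub>m N N)"
    using fam unfolding famL_def by auto
  define Fs where "Fs i = X * (Es i * Ys i)" for i
  have YX: "\<And>i W. i < k \<Longrightarrow> W \<in> bdc N c \<Longrightarrow> Ys i * (X * W) = Es i * W"
  proof -
    fix i W assume i: "i < k" and W: "W \<in> bdc N c"
    show "Ys i * (X * W) = Es i * W" using bassoc[OF Ys(1)[OF i] X W] Ys(2)[OF i] by simp
  qed
  show ?thesis unfolding famR_def
  proof (intro exI[of _ Fs] allI impI conjI)
    fix i assume i: "i < k"
    show "Fs i \<in> bdc N c" unfolding Fs_def using X Eb[OF i] Ys(1)[OF i] by simp
    show "\<exists>Y\<in>bdc N c. Fs i = X * Y" unfolding Fs_def using Eb[OF i] Ys(1)[OF i] by auto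
    show "Fs i \<noteq> 0\<^sub>m N N"
    proof
      assume F0: "Fs i = 0\<^sub>m N N"
      have "Ys i * Fs i * X = Ys i * (X * (Es i * (Ys i * X)))" unfolding Fs_def
        using X Eb[OF i] Ys(1)[OF i] by simp
      also have "\<dots> = Es i * (Es i * Es i)" using YX[OF i] Ys(2)[OF i] X Eb[OF i] by simp
      also have "\<dots> = Es i" using Eo[OF i i] by simp
      finally have "Ys i * Fs i * X = Es i" .
      moreover have "Ys i * Fs i * X = 0\<^sub>m N N" unfolding F0 using Ys(1)[OF i] X
        by (simp add: right_mult_zero_mat[of _ N N] left_mult_zero_mat[of _ N N])
      ultimately show False using Enz[OF i] by simp
    qed
    fix j assume j: "j < k"
    have "Fs i * Fs j = X * (Es i * (Ys i * (X * (Es j * Ys j))))" unfolding Fs_def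
      using X Eb[OF i] Ys(1)[OF i] Eb[OF j] Ys(1)[OF j] by simp
    also have "\<dots> = X * (Es i * (Es i * (Es j * Ys j)))"
      using YX[OF i, of "Es j * Ys j"] Eb[OF j] Ys(1)[OF j] by simp
    also have "Es i * (Es i * (Es j * Ys j)) = (Es i * Es i) * (Es j * Ys j)"
      using Eb[OF i] Eb[OF j] Ys(1)[OF j] by simp
    also have "Es i * Es i = Es i" using Eo[OF i i] by simp
    also have "Es i * (Es j * Ys j) = (Es i * Es j) * Ys j"
      using Eb[OF i] Eb[OF j] Ys(1)[OF j] by simp
    finally have "Fs i * Fs j = X * (Es i * Es j * Ys j)" .
    then show "Fs i * Fs j = (if i = j then Fs i else 0\<^sub>m N N)"
      unfolding Fs_def using Eo[OF i j] X Ys(1)[OF j]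
      by (auto simp: right_mult_zero_mat[of _ N N] left_mult_zero_mat[of _ N N])
  qed
qed

lemma famR_hom:
  assumes clos: "\<And>X. X \<in> bdc N c \<Longrightarrow> \<psi> X \<in> bdc N c"
    and mult: "\<And>X Y. X \<in> bdc N c \<Longrightarrow> Y \<in> bdc N c \<Longrightarrow> \<psi> (X * Y) = \<psi> X * \<psi> Y"
    and z: "\<psi> (0\<^sub>m N N) = 0\<^sub>m N N"
    and inj0: "\<And>X. X \<in> bdc N c \<Longrightarrow> \<psi> X = 0\<^sub>m N N \<Longrightarrow> X = 0\<^sub>m N N"
    and X: "X \<in> bdc N c" and fam: "famR N c X k Es"
  shows "famR N c (\<psi> X) k (\<lambda>i. \<psi> (Es i))"
  unfolding famR_def
proof (intro allI impI conjI)
  fix i assume i: "i < k"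
  have Eb: "Es i \<in> bdc N c" using fam i unfolding famR_def by auto
  show "\<psi> (Es i) \<in> bdc N c" using clos[OF Eb] .
  show "\<psi> (Es i) \<noteq> 0\<^sub>m N N" using inj0[OF Eb] fam i unfolding famR_def by auto
  obtain Y where Y: "Y \<in> bdc N c" "Es i = X * Y" using fam i unfolding famR_def by auto
  show "\<exists>Y\<in>bdc N c. \<psi> (Es i) = \<psi> X * Y" using Y mult[OF X Y(1)] clos[OF Y(1)] by auto
  fix j assume j: "j < k"
  have Ej: "Es j \<in> bdc N c" using fam j unfolding famR_def by auto
  show "\<psi> (Es i) * \<psi> (Es j) = (if i = j then \<psi> (Es i) else 0\<^sub>m N N)"
    using mult[OF Eb Ej, symmetric] fam i j z unfolding famR_def by auto
qed

lemma famR_antihom: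
  assumes clos: "\<And>X. X \<in> bdc N c \<Longrightarrow> \<psi> X \<in> bdc N c"
    and mult: "\<And>X Y. X \<in> bdc N c \<Longrightarrow> Y \<in> bdc N c \<Longrightarrow> \<psi> (X * Y) = \<psi> Y * \<psi> X"
    and z: "\<psi> (0\<^sub>m N N) = 0\<^sub>m N N"
    and inj0: "\<And>X. X \<in> bdc N c \<Longrightarrow> \<psi> X = 0\<^sub>m N N \<Longrightarrow> X = 0\<^sub>m N N"
    and X: "X \<in> bdc N c" and fam: "famR N c X k Es"
  shows "famL N c (\<psi> X) k (\<lambda>i. \<psi> (Es i))"
  unfolding famL_def
proof (intro allI impI conjI)
  fix i assume i: "i < k"
  have Eb: "Es i \<in> bdc N c" using fam i unfolding famR_def by auto
  show "\<psi> (Es i) \<in> bdc N c" using clos[OF Eb] .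
  show "\<psi> (Es i) \<noteq> 0\<^sub>m N N" using inj0[OF Eb] fam i unfolding famR_def by auto
  obtain Y where Y: "Y \<in> bdc N c" "Es i = X * Y" using fam i unfolding famR_def by auto
  show "\<exists>Y\<in>bdc N c. \<psi> (Es i) = Y * \<psi> X" using Y mult[OF X Y(1)] clos[OF Y(1)] by auto
  fix j assume j: "j < k"
  have Ej: "Es j \<in> bdc N c" using fam j unfolding famR_def by auto
  have "\<psi> (Es j * Es i) = \<psi> (Es i) * \<psi> (Es j)" using mult[OF Ej Eb] .
  moreover have "Es j * Es i = (if i = j then Es i else 0\<^sub>m N N)" using fam i j unfolding famR_def by auto
  ultimately show "\<psi> (Es i) * \<psi> (Es j) = (if i = j then \<psi> (Es i) else 0\<^sub>m N N)"
    using z by (auto split: if_splits)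
qed

lemma rank_le_hom:
  assumes clos: "\<And>X. X \<in> bdc N c \<Longrightarrow> \<psi> X \<in> bdc N c"
    and mult: "\<And>X Y. X \<in> bdc N c \<Longrightarrow> Y \<in> bdc N c \<Longrightarrow> \<psi> (X * Y) = \<psi> X * \<psi> Y"
    and z: "\<psi> (0\<^sub>m N N) = 0\<^sub>m N N"
    and inj0: "\<And>X. X \<in> bdc N c \<Longrightarrow> \<psi> X = 0\<^sub>m N N \<Longrightarrow> X = 0\<^sub>m N N"
    and X: "X \<in> bdc N c"
  shows "vec_space.rank N X \<le> vec_space.rank N (\<psi> X)"
proof -
  obtain Es where "famR N c X (vec_space.rank N X) Es" using famA[OF X] by blast
  from famR_hom[OF clos mult z inj0 X this] show ?thesis
    using famR_le_rank clos[OF X] by (meson bdc_carrier)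
qed

lemma rank_le_antihom:
  assumes clos: "\<And>X. X \<in> bdc N c \<Longrightarrow> \<psi> X \<in> bdc N c"
    and mult: "\<And>X Y. X \<in> bdc N c \<Longrightarrow> Y \<in> bdc N c \<Longrightarrow> \<psi> (X * Y) = \<psi> Y * \<psi> X"
    and z: "\<psi> (0\<^sub>m N N) = 0\<^sub>m N N"
    and inj0: "\<And>X. X \<in> bdc N c \<Longrightarrow> \<psi> X = 0\<^sub>m N N \<Longrightarrow> X = 0\<^sub>m N N"
    and X: "X \<in> bdc N c"
  shows "vec_space.rank N X \<le> vec_space.rank N (\<psi> X)"
proof -
  obtain Es where "famR N c X (vec_space.rank N X) Es" using famA[OF X] by blast
  from famR_antihom[OF clos mult z inj0 X this] obtain Fs where "famR N c (\<psi> X) (vec_space.rank N X) Fs"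
    using famL_famR clos[OF X] by blast
  then show ?thesis using famR_le_rank clos[OF X] by (meson bdc_carrier)
qed

lemma rank_mult_le:
  assumes A: "A \<in> bdc N c" and B: "B \<in> bdc N c"
  shows "vec_space.rank N (A * B) \<le> vec_space.rank N A"
proof -
  obtain Es where fam: "famR N c (A * B) (vec_space.rank N (A * B)) Es" using famA[of "A * B" N c] A B by auto
  have "famR N c A (vec_space.rank N (A * B)) Es"
    unfolding famR_def
  proof (intro allI impI conjI)
    fix i assume i: "i < vec_space.rank N (A * B)"
    show "Es i \<in> bdc N c" "Es i \<noteq> 0\<^sub>m N N" using fam i unfolding famR_def by auto
    obtain Y where Y: "Y \<in> bdc N c" "Es i = A * B * Y" using fam i unfolding famR_def by auto
    show "\<exists>Y\<in>bdc N c. Es i = A * Y" using Y A B by (intro bexI[of _ "B * Y"]) auto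
    fix j assume "j < vec_space.rank N (A * B)"
    then show "Es i * Es j = (if i = j then Es i else 0\<^sub>m N N)" using fam i unfolding famR_def by auto
  qed
  then show ?thesis using famR_le_rank A by (meson bdc_carrier)
qed

definition rho :: "nat \<Rightarrow> nat \<Rightarrow> nat" where "rho c i = (if c \<le> i then c else 0)"

lemma zmat_bdc: "mat N N (\<lambda>(i,j). if j = rho c i then u $ i else 0) \<in> bdc N c"
  by (rule bdcI) (auto simp: rho_def split: if_splits)

lemma zmat_mult:
  assumes A: "A \<in> bdc N c" and u: "u \<in> carrier_vec N"
  shows "A * mat N N (\<lambda>(i,j). if j = rho c i then u $ i else 0) = mat N N (\<lambda>(i,j). if j = rho c i then (A *\<^sub>v u) $ i else 0)"
proof (rule eq_matI)
  fix i j assume "i < dim_row (mat N N (\<lambda>(i,j). if j = rho c i then (A *\<^sub>v u) $ i else 0))"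
    "j < dim_col (mat N N (\<lambda>(i,j). if j = rho c i then (A *\<^sub>v u) $ i else 0))"
  then have i: "i < N" and j: "j < N" by auto
  have Ac: "A \<in> carrier_mat N N" using A by simp
  have "(A * mat N N (\<lambda>(i,j). if j = rho c i then u $ i else 0)) $$ (i,j)
     = (\<Sum>l\<in>{0..<N}. A $$ (i,l) * (if j = rho c l then u $ l else 0))"
    using Ac i j by (simp add: scalar_prod_def)
  also have "\<dots> = (\<Sum>l\<in>{0..<N}. if j = rho c i then A $$ (i,l) * u $ l else 0)"
  proof (rule sum.cong[OF refl])
    fix l assume "l \<in> {0..<N}"
    then have l: "l < N" by simp
    show "A $$ (i,l) * (if j = rho c l then u $ l else 0) = (if j = rho c i then A $$ (i,l) * u $ l else 0)"
    proof (cases "(c \<le> i) = (c \<le> l)")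
      case True
      then have "rho c l = rho c i" unfolding rho_def by simp
      then show ?thesis by simp
    next
      case False
      then show ?thesis using bdc_off[OF A i l] by simp
    qed
  qed
  also have "\<dots> = (if j = rho c i then (A *\<^sub>v u) $ i else 0)"
    using Ac u i by (simp add: scalar_prod_def)
  finally show "(A * mat N N (\<lambda>(i,j). if j = rho c i then u $ i else 0)) $$ (i,j)
     = mat N N (\<lambda>(i,j). if j = rho c i then (A *\<^sub>v u) $ i else 0) $$ (i,j)" using i j by simp
qed (use A in auto)

lemma kernel_vec:
  assumes A: "A \<in> bdc N c" and B: "B \<in> bdc N c"
    and ker: "\<And>Z. Z \<in> bdc N c \<Longrightarrow> A * Z = 0\<^sub>m N N \<Longrightarrow> B * Z = 0\<^sub>m N N"
    and u: "u \<in> carrier_vec N" and Au: "A *\<^sub>v u = 0\<^sub>v N"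
  shows "B *\<^sub>v u = 0\<^sub>v N"
proof (rule eq_vecI)
  define Z where "Z = mat N N (\<lambda>(i,j). if j = rho c i then u $ i else 0)"
  have Z: "Z \<in> bdc N c" unfolding Z_def by (rule zmat_bdc)
  have "A * Z = 0\<^sub>m N N" unfolding Z_def zmat_mult[OF A u] Au by (intro eq_matI) auto
  then have BZ: "B * Z = 0\<^sub>m N N" using ker[OF Z] by simp
  fix i assume "i < dim_vec (0\<^sub>v N)"
  then have i: "i < N" by simp
  have ri: "rho c i < N" using i unfolding rho_def by auto
  have "(B * Z) $$ (i, rho c i) = (B *\<^sub>v u) $ i" unfolding Z_def zmat_mult[OF B u] using i ri by simp
  then show "(B *\<^sub>v u) $ i = 0\<^sub>v N $ i" using BZ i ri by simp
qed (use B in simp)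

lemma kernel_rank:
  assumes A: "A \<in> bdc N c" and B: "B \<in> bdc N c"
    and ker: "\<And>Z. Z \<in> bdc N c \<Longrightarrow> A * Z = 0\<^sub>m N N \<Longrightarrow> B * Z = 0\<^sub>m N N"
  shows "vec_space.rank N B \<le> vec_space.rank N A"
proof -
  let ?k = "vec_space.rank N B"
  have Ac: "A \<in> carrier_mat N N" and Bc: "B \<in> carrier_mat N N" using A B by auto
  obtain Es where "famR N c B ?k Es" using famA[OF B] by blast
  then obtain W where W: "W \<in> carrier_mat N ?k" and inj: "\<And>v. v \<in> carrier_vec ?k \<Longrightarrow> (B * W) *\<^sub>v v = 0\<^sub>v N \<Longrightarrow> v = 0\<^sub>v ?k"
    using famR_W[OF Bc] by blast
  interpret vec_space "TYPE(complex)" N .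
  show ?thesis
  proof (rule L0[OF Ac W])
    fix v :: "complex vec" assume v: "v \<in> carrier_vec ?k" and z: "A * W *\<^sub>v v = 0\<^sub>v N"
    have Wv: "W *\<^sub>v v \<in> carrier_vec N" using W v by simp
    have "A *\<^sub>v (W *\<^sub>v v) = 0\<^sub>v N" using z assoc_mult_mat_vec[OF Ac W v] by simp
    then have "B *\<^sub>v (W *\<^sub>v v) = 0\<^sub>v N" using kernel_vec[OF A B ker Wv] by blast
    then have "(B * W) *\<^sub>v v = 0\<^sub>v N" using assoc_mult_mat_vec[OF Bc W v] by simp
    then show "v = 0\<^sub>v ?k" using inj v by blast
  qed
qed


definition inv2 :: "nat set \<Rightarrow> nat set \<Rightarrow> nat" where
  "inv2 A B = card {(a, b). a \<in> A \<and> b \<in> B \<and> b < a}"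

lemma cl_sign_inv2: "cl_sign p A B = (-1) ^ inv2 A B * (\<Prod>a\<in>A \<inter> B. cl_eta p a)"
  unfolding cl_sign_def inv2_def ..

lemma inv2_union_left:
  assumes "finite X" "finite Y" "finite Z" "X \<inter> Y = {}"
  shows "inv2 (X \<union> Y) Z = inv2 X Z + inv2 Y Z"
proof -
  have eq: "{(a, b). a \<in> X \<union> Y \<and> b \<in> Z \<and> b < a} = {(a, b). a \<in> X \<and> b \<in> Z \<and> b < a} \<union> {(a, b). a \<in> Y \<and> b \<in> Z \<and> b < a}"
    by auto
  have f1: "finite {(a, b). a \<in> X \<and> b \<in> Z \<and> b < a}"
    by (rule finite_subset[of _ "X \<times> Z"]) (use assms in auto)
  have f2: "finite {(a, b). a \<in> Y \<and> b \<in> Z \<and> b < a}"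
    by (rule finite_subset[of _ "Y \<times> Z"]) (use assms in auto)
  show ?thesis unfolding inv2_def eq
    by (rule card_Un_disjoint[OF f1 f2]) (use assms in auto)
qed

lemma inv2_union_right:
  assumes "finite X" "finite Y" "finite Z" "X \<inter> Y = {}"
  shows "inv2 Z (X \<union> Y) = inv2 Z X + inv2 Z Y"
proof -
  have eq: "{(a, b). a \<in> Z \<and> b \<in> X \<union> Y \<and> b < a} = {(a, b). a \<in> Z \<and> b \<in> X \<and> b < a} \<union> {(a, b). a \<in> Z \<and> b \<in> Y \<and> b < a}"
    by auto
  have f1: "finite {(a, b). a \<in> Z \<and> b \<in> X \<and> b < a}"
    by (rule finite_subset[of _ "Z \<times> X"]) (use assms in auto)
  have f2: "finite {(a, b). a \<in> Z \<and> b \<in> Y \<and> b < a}"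
    by (rule finite_subset[of _ "Z \<times> Y"]) (use assms in auto)
  show ?thesis unfolding inv2_def eq
    by (rule card_Un_disjoint[OF f1 f2]) (use assms in auto)
qed

lemma inv2_diag:
  assumes A: "finite A"
  shows "2 * inv2 A A + card A = card A * card A"
proof -
  define L where "L = {(a, b). a \<in> A \<and> b \<in> A \<and> b < a}"
  define G where "G = {(a, b). a \<in> A \<and> b \<in> A \<and> a < b}"
  define D where "D = {(a, b). a \<in> A \<and> b \<in> A \<and> a = b}"
  have AA: "A \<times> A = (L \<union> G) \<union> D" unfolding L_def G_def D_def by auto
  have fL: "finite L" unfolding L_def by (rule finite_subset[of _ "A \<times> A"]) (use A in auto)
  have fG: "finite G" unfolding G_def by (rule finite_subset[of _ "A \<times> A"]) (use A in auto)
  have fD: "finite D" unfolding D_def by (rule finite_subset[of _ "A \<times> A"]) (use A in auto)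
  have GL: "G = prod.swap ` L" unfolding G_def L_def by auto
  have cG: "card G = card L" unfolding GL by (rule card_image) (rule inj_swap)
  have DA: "D = (\<lambda>x. (x, x)) ` A" unfolding D_def by auto
  have cD: "card D = card A" unfolding DA by (rule card_image) (simp add: inj_on_def)
  have "card (A \<times> A) = card (L \<union> G) + card D"
    unfolding AA by (rule card_Un_disjoint) (use fL fG fD in \<open>auto simp: L_def G_def D_def\<close>)
  also have "card (L \<union> G) = card L + card G"
    by (rule card_Un_disjoint[OF fL fG]) (auto simp: L_def G_def)
  finally show ?thesis using cG cD unfolding inv2_def L_def[symmetric] by (simp add: card_cartesian_product)
qed

lemma tri_inv2:
  assumes "finite A"
  shows "card A * (card A - 1) div 2 = inv2 A A"
proof -
  have "card A * (card A - 1) = card A * card A - card A" by (simp add: diff_mult_distrib2)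
  also have "\<dots> = 2 * inv2 A A" using inv2_diag[OF assms] by simp
  finally show ?thesis by simp
qed

lemma neg1_pow_eq: "even (x + y) \<Longrightarrow> (-1::complex) ^ x = (-1) ^ y"
  by (auto simp: minus_one_power_iff)

lemma split_sets:
  fixes A B :: "nat set"
  shows "A = (A - B) \<union> (A \<inter> B)" "B = (B - A) \<union> (A \<inter> B)" "(A - B) \<union> (B - A) = (A - B) \<union> (B - A)"
    "(A - B) \<inter> (A \<inter> B) = {}" "(B - A) \<inter> (A \<inter> B) = {}" "(A - B) \<inter> (B - A) = {}"
  by auto

lemma rev_parity:
  assumes A: "finite A" and B: "finite B"
  defines "D \<equiv> (A - B) \<union> (B - A)"
  shows "(-1::complex) ^ inv2 B A * (-1) ^ inv2 A A * (-1) ^ inv2 B B = (-1) ^ inv2 D D * (-1) ^ inv2 A B"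
proof -
  define P where "P = A - B"
  define Q where "Q = B - A"
  define C where "C = A \<inter> B"
  have fP: "finite P" and fQ: "finite Q" and fC: "finite C" unfolding P_def Q_def C_def using A B by auto
  have dPC: "P \<inter> C = {}" and dQC: "Q \<inter> C = {}" and dPQ: "P \<inter> Q = {}" unfolding P_def Q_def C_def by auto
  have eA: "A = P \<union> C" and eB: "B = Q \<union> C" and eD: "D = P \<union> Q" unfolding P_def Q_def C_def D_def by auto
  have fPC: "finite (P \<union> C)" and fQC: "finite (Q \<union> C)" and fPQ: "finite (P \<union> Q)" using fP fQ fC by auto
  note L = inv2_union_left and R = inv2_union_right
  have i1: "inv2 A A = inv2 P P + inv2 P C + inv2 C P + inv2 C C"
    unfolding eA L[OF fP fC fPC dPC] R[OF fP fC fP dPC] R[OF fP fC fC dPC] by simp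
  have i2: "inv2 B B = inv2 Q Q + inv2 Q C + inv2 C Q + inv2 C C"
    unfolding eB L[OF fQ fC fQC dQC] R[OF fQ fC fQ dQC] R[OF fQ fC fC dQC] by simp
  have i3: "inv2 D D = inv2 P P + inv2 P Q + inv2 Q P + inv2 Q Q"
    unfolding eD L[OF fP fQ fPQ dPQ] R[OF fP fQ fP dPQ] R[OF fP fQ fQ dPQ] by simp
  have i4: "inv2 A B = inv2 P Q + inv2 P C + inv2 C Q + inv2 C C"
    unfolding eA eB L[OF fP fC fQC dPC] R[OF fQ fC fP dQC] R[OF fQ fC fC dQC] by simp
  have i5: "inv2 B A = inv2 Q P + inv2 Q C + inv2 C P + inv2 C C"
    unfolding eA eB L[OF fQ fC fPC dQC] R[OF fP fC fQ dPC] R[OF fP fC fC dPC] by simp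
  have "even ((inv2 B A + inv2 A A + inv2 B B) + (inv2 D D + inv2 A B))"
    unfolding i1 i2 i3 i4 i5 by presburger
  then have "(-1::complex) ^ (inv2 B A + inv2 A A + inv2 B B) = (-1) ^ (inv2 D D + inv2 A B)"
    by (rule neg1_pow_eq)
  then show ?thesis by (simp add: power_add)
qed

lemma hat_parity:
  assumes A: "finite A" and B: "finite B"
  shows "(-1::complex) ^ card A * (-1) ^ card B = (-1) ^ card ((A - B) \<union> (B - A))"
proof -
  have cA: "card A = card (A - B) + card (A \<inter> B)"
    using card_Un_disjoint[of "A - B" "A \<inter> B"] A by (metis Diff_Diff_Int Int_lower1 card_Diff_subset_Int finite_Diff finite_Int card_Diff_subset inf_commute le_add_diff_inverse2 card_mono)
  have cB: "card B = card (B - A) + card (A \<inter> B)"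
    using card_Un_disjoint[of "B - A" "A \<inter> B"] B by (metis Diff_Diff_Int Int_lower2 card_Diff_subset_Int finite_Diff finite_Int card_Diff_subset inf_commute le_add_diff_inverse2 card_mono)
  have cD: "card ((A - B) \<union> (B - A)) = card (A - B) + card (B - A)"
    by (rule card_Un_disjoint) (use A B in auto)
  have "even ((card A + card B) + card ((A - B) \<union> (B - A)))" unfolding cA cB cD by presburger
  then have "(-1::complex) ^ (card A + card B) = (-1) ^ card ((A - B) \<union> (B - A))" by (rule neg1_pow_eq)
  then show ?thesis by (simp add: power_add)
qed

lemma eta_sq: "cl_eta p a * cl_eta p a = 1"
  unfolding cl_eta_def by simp

lemma prod_eta_sq: "(\<Prod>a\<in>X. cl_eta p a) * (\<Prod>a\<in>X. cl_eta p a) = 1"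
  by (simp add: prod.distrib[symmetric] eta_sq)

lemma prod_eta_sd:
  assumes A: "finite A" and B: "finite B"
  shows "(\<Prod>a\<in>A. cl_eta p a) * (\<Prod>a\<in>B. cl_eta p a) = (\<Prod>a\<in>(A - B) \<union> (B - A). cl_eta p a)"
proof -
  have pA: "(\<Prod>a\<in>A. cl_eta p a) = (\<Prod>a\<in>A - B. cl_eta p a) * (\<Prod>a\<in>A \<inter> B. cl_eta p a)"
  proof -
    have "(\<Prod>a\<in>A. cl_eta p a) = (\<Prod>a\<in>(A - B) \<union> (A \<inter> B). cl_eta p a)" by (rule prod.cong) auto
    also have "\<dots> = (\<Prod>a\<in>A - B. cl_eta p a) * (\<Prod>a\<in>A \<inter> B. cl_eta p a)"
      by (rule prod.union_disjoint) (use A in auto)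
    finally show ?thesis .
  qed
  have pB: "(\<Prod>a\<in>B. cl_eta p a) = (\<Prod>a\<in>B - A. cl_eta p a) * (\<Prod>a\<in>A \<inter> B. cl_eta p a)"
  proof -
    have "(\<Prod>a\<in>B. cl_eta p a) = (\<Prod>a\<in>(B - A) \<union> (A \<inter> B). cl_eta p a)" by (rule prod.cong) auto
    also have "\<dots> = (\<Prod>a\<in>B - A. cl_eta p a) * (\<Prod>a\<in>A \<inter> B. cl_eta p a)"
      by (rule prod.union_disjoint) (use B in auto)
    finally show ?thesis .
  qed
  have pD: "(\<Prod>a\<in>(A - B) \<union> (B - A). cl_eta p a) = (\<Prod>a\<in>A - B. cl_eta p a) * (\<Prod>a\<in>B - A. cl_eta p a)"
    by (rule prod.union_disjoint) (use A B in auto)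
  show ?thesis unfolding pA pB pD
    using prod_eta_sq[of p "A \<inter> B"] by (simp add: algebra_simps)
qed

lemma sign_sq: "cl_sign p A B * cl_sign p A B = 1"
proof -
  have "((-1::complex) ^ inv2 A B) * ((-1) ^ inv2 A B) = 1" by (simp add: power_add[symmetric])
  then show ?thesis unfolding cl_sign_inv2 using prod_eta_sq[of p "A \<inter> B"]
    by (metis (no_types, lifting) mult.assoc mult.commute mult.left_neutral)
qed

lemma cnj_eta: "cnj (cl_eta p a) = cl_eta p a" unfolding cl_eta_def by simp

lemma cnj_sign: "cnj (cl_sign p A B) = cl_sign p A B"
  unfolding cl_sign_def by (simp add: cnj_eta)

lemma rev_sign_identity:
  assumes A: "finite A" and B: "finite B"
  defines "w \<equiv> \<lambda>X::nat set. (-1::complex) ^ (card X * (card X - 1) div 2)"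
  shows "cl_sign p B A * w A * w B = w ((A - B) \<union> (B - A)) * cl_sign p A B"
proof -
  have fD: "finite ((A - B) \<union> (B - A))" using A B by simp
  have w: "\<And>X. finite X \<Longrightarrow> w X = (-1) ^ inv2 X X" unfolding w_def using tri_inv2 by simp
  have BA: "B \<inter> A = A \<inter> B" by auto
  show ?thesis
    unfolding cl_sign_inv2 w[OF A] w[OF B] w[OF fD] BA
    using rev_parity[OF A B] by (simp add: algebra_simps)
qed

lemma dag_sign_identity:
  assumes A: "finite A" and B: "finite B"
  shows "cl_sign p B A * cl_sign p A A * cl_sign p B B = cl_sign p ((A - B) \<union> (B - A)) ((A - B) \<union> (B - A)) * cl_sign p A B"
proof -
  have BA: "B \<inter> A = A \<inter> B" by auto
  have r: "(-1::complex) ^ inv2 B A * (-1) ^ inv2 A A * (-1) ^ inv2 B B = (-1) ^ inv2 ((A - B) \<union> (B - A)) ((A - B) \<union> (B - A)) * (-1) ^ inv2 A B"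
    using rev_parity[OF A B] by simp
  have e: "(\<Prod>a\<in>A. cl_eta p a) * (\<Prod>a\<in>B. cl_eta p a) = (\<Prod>a\<in>(A - B) \<union> (B - A). cl_eta p a)"
    by (rule prod_eta_sd[OF A B])
  show ?thesis
    unfolding cl_sign_inv2 BA Int_absorb
  proof -
    let ?a = "(-1::complex) ^ inv2 B A" and ?b = "(-1::complex) ^ inv2 A A" and ?c = "(-1::complex) ^ inv2 B B"
    let ?d = "(-1::complex) ^ inv2 ((A - B) \<union> (B - A)) ((A - B) \<union> (B - A))" and ?e = "(-1::complex) ^ inv2 A B"
    let ?C = "\<Prod>a\<in>A \<inter> B. cl_eta p a" and ?PA = "\<Prod>a\<in>A. cl_eta p a" and ?PB = "\<Prod>a\<in>B. cl_eta p a"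
    let ?PD = "\<Prod>a\<in>(A - B) \<union> (B - A). cl_eta p a"
    have "?a * ?C * (?b * ?PA) * (?c * ?PB) = (?a * ?b * ?c) * ?C * (?PA * ?PB)" by (simp add: algebra_simps)
    also have "\<dots> = (?d * ?e) * ?C * ?PD" using r e by simp
    also have "\<dots> = ?d * ?PD * (?e * ?C)" by (simp add: algebra_simps)
    finally show "?a * ?C * (?b * ?PA) * (?c * ?PB) = ?d * ?PD * (?e * ?C)" .
  qed
qed


lemma cl_mult_in: "cl_mult p q M N \<in> cl_elems p q"
  unfolding cl_elems_def cl_mult_def by auto

lemma elems_out: "M \<in> cl_elems p q \<Longrightarrow> \<not> A \<subseteq> {..<p+q} \<Longrightarrow> M A = 0"
  unfolding cl_elems_def by auto

lemma sd_iff: "((A - B) \<union> (B - A) = C) = (B = (A - C) \<union> (C - A))"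
  by blast

lemma cl_mult_alt:
  "cl_mult p q M N C = (if C \<subseteq> {..<p+q} then
     (\<Sum>A\<in>Pow {..<p+q}. cl_sign p A ((A - C) \<union> (C - A)) * M A * N ((A - C) \<union> (C - A))) else 0)"
proof (cases "C \<subseteq> {..<p+q}")
  case True
  have inner: "(\<Sum>B\<in>Pow {..<p+q}. if (A - B) \<union> (B - A) = C then cl_sign p A B * M A * N B else 0)
      = cl_sign p A ((A - C) \<union> (C - A)) * M A * N ((A - C) \<union> (C - A))" if A: "A \<in> Pow {..<p+q}" for A
  proof -
    have "(\<Sum>B\<in>Pow {..<p+q}. if (A - B) \<union> (B - A) = C then cl_sign p A B * M A * N B else 0)
        = (\<Sum>B\<in>Pow {..<p+q}. if B = (A - C) \<union> (C - A) then cl_sign p A B * M A * N B else 0)"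
      by (intro sum.cong refl) (simp only: sd_iff)
    also have "\<dots> = cl_sign p A ((A - C) \<union> (C - A)) * M A * N ((A - C) \<union> (C - A))"
      using A True by (subst sum.delta) auto
    finally show ?thesis .
  qed
  show ?thesis unfolding cl_mult_def using True inner by simp
qed (simp add: cl_mult_def)

lemma f_sum:
  assumes fadd: "\<And>x y. f (x + y) = f x + f y" and f0: "f 0 = 0"
  shows "f (sum g S) = (\<Sum>x\<in>S. f (g x))"
proof (cases "finite S")
  case True
  then show ?thesis by (induction S rule: finite_induct) (auto simp: fadd f0)
qed (simp add: f0)

definition tw :: "(nat set \<Rightarrow> complex) \<Rightarrow> (complex \<Rightarrow> complex) \<Rightarrow> cl \<Rightarrow> cl" where
  "tw w f M = (\<lambda>A. w A * f (M A))"

lemma tw_elems: "M \<in> cl_elems p q \<Longrightarrow> f 0 = 0 \<Longrightarrow> tw w f M \<in> cl_elems p q"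
  unfolding tw_def cl_elems_def by auto

lemma tw_auto:
  assumes fadd: "\<And>x y. f (x + y) = f x + f y" and fmul: "\<And>x y. f (x * y) = f x * f y" and f0: "f 0 = 0"
    and fs: "\<And>A B. f (cl_sign p A B) = cl_sign p A B"
    and ww: "\<And>A B. A \<subseteq> {..<p+q} \<Longrightarrow> B \<subseteq> {..<p+q} \<Longrightarrow> w A * w B = w ((A - B) \<union> (B - A))"
  shows "cl_mult p q (tw w f M) (tw w f N) = tw w f (cl_mult p q M N)"
proof (rule ext)
  fix C
  show "cl_mult p q (tw w f M) (tw w f N) C = tw w f (cl_mult p q M N) C"
  proof (cases "C \<subseteq> {..<p+q}")
    case False
    then show ?thesis unfolding cl_mult_def tw_def using f0 by simp
  next
    case True
    have "tw w f (cl_mult p q M N) C = w C * (\<Sum>A\<in>Pow {..<p+q}. \<Sum>B\<in>Pow {..<p+q}.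
         f (if (A - B) \<union> (B - A) = C then cl_sign p A B * M A * N B else 0))"
      unfolding tw_def cl_mult_def using True by (simp add: f_sum[of f, OF fadd f0])
    also have "\<dots> = (\<Sum>A\<in>Pow {..<p+q}. \<Sum>B\<in>Pow {..<p+q}.
         w C * f (if (A - B) \<union> (B - A) = C then cl_sign p A B * M A * N B else 0))"
      by (simp add: sum_distrib_left)
    also have "\<dots> = (\<Sum>A\<in>Pow {..<p+q}. \<Sum>B\<in>Pow {..<p+q}.
         (if (A - B) \<union> (B - A) = C then cl_sign p A B * tw w f M A * tw w f N B else 0))"
    proof (intro sum.cong refl)
      fix A B assume A: "A \<in> Pow {..<p+q}" and B: "B \<in> Pow {..<p+q}"
      show "w C * f (if (A - B) \<union> (B - A) = C then cl_sign p A B * M A * N B else 0)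
          = (if (A - B) \<union> (B - A) = C then cl_sign p A B * tw w f M A * tw w f N B else 0)"
      proof (cases "(A - B) \<union> (B - A) = C")
        case True
        then have "w C = w A * w B" using ww[of A B] A B by simp
        then show ?thesis using True unfolding tw_def by (simp add: fmul fs algebra_simps)
      qed (simp add: f0)
    qed
    also have "\<dots> = cl_mult p q (tw w f M) (tw w f N) C"
      unfolding cl_mult_def using True by simp
    finally show ?thesis by simp
  qed
qed

lemma tw_anti:
  assumes fadd: "\<And>x y. f (x + y) = f x + f y" and fmul: "\<And>x y. f (x * y) = f x * f y" and f0: "f 0 = 0"
    and fs: "\<And>A B. f (cl_sign p A B) = cl_sign p A B"
    and ww: "\<And>A B. A \<subseteq> {..<p+q} \<Longrightarrow> B \<subseteq> {..<p+q} \<Longrightarrow> cl_sign p B A * w A * w B = w ((A - B) \<union> (B - A)) * cl_sign p A B"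
  shows "cl_mult p q (tw w f N) (tw w f M) = tw w f (cl_mult p q M N)"
proof (rule ext)
  fix C
  show "cl_mult p q (tw w f N) (tw w f M) C = tw w f (cl_mult p q M N) C"
  proof (cases "C \<subseteq> {..<p+q}")
    case False
    then show ?thesis unfolding cl_mult_def tw_def using f0 by simp
  next
    case True
    have "tw w f (cl_mult p q M N) C = w C * (\<Sum>A\<in>Pow {..<p+q}. \<Sum>B\<in>Pow {..<p+q}.
         f (if (A - B) \<union> (B - A) = C then cl_sign p A B * M A * N B else 0))"
      unfolding tw_def cl_mult_def using True by (simp add: f_sum[of f, OF fadd f0])
    also have "\<dots> = (\<Sum>A\<in>Pow {..<p+q}. \<Sum>B\<in>Pow {..<p+q}.
         w C * f (if (A - B) \<union> (B - A) = C then cl_sign p A B * M A * N B else 0))"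
      by (simp add: sum_distrib_left)
    also have "\<dots> = (\<Sum>A\<in>Pow {..<p+q}. \<Sum>B\<in>Pow {..<p+q}.
         (if (B - A) \<union> (A - B) = C then cl_sign p B A * tw w f N B * tw w f M A else 0))"
    proof (intro sum.cong refl)
      fix A B assume A: "A \<in> Pow {..<p+q}" and B: "B \<in> Pow {..<p+q}"
      have sd: "(B - A) \<union> (A - B) = (A - B) \<union> (B - A)" by blast
      show "w C * f (if (A - B) \<union> (B - A) = C then cl_sign p A B * M A * N B else 0)
          = (if (B - A) \<union> (A - B) = C then cl_sign p B A * tw w f N B * tw w f M A else 0)"
      proof (cases "(A - B) \<union> (B - A) = C")
        case True
        have "cl_sign p B A * w A * w B = w C * cl_sign p A B" using ww[of A B] A B True by simp
        then have "cl_sign p B A * tw w f N B * tw w f M A = w C * (cl_sign p A B * f (M A) * f (N B))"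
          unfolding tw_def by (simp add: algebra_simps)
        then show ?thesis using True sd by (simp add: fmul fs)
      next
        case False
        then show ?thesis using sd f0 by simp
      qed
    qed
    also have "\<dots> = (\<Sum>B\<in>Pow {..<p+q}. \<Sum>A\<in>Pow {..<p+q}.
         (if (B - A) \<union> (A - B) = C then cl_sign p B A * tw w f N B * tw w f M A else 0))"
      by (rule sum.swap)
    also have "\<dots> = cl_mult p q (tw w f N) (tw w f M) C"
      unfolding cl_mult_def using True by simp
    finally show ?thesis by simp
  qed
qed

lemma tw_invol:
  assumes fmul: "\<And>x y. f (x * y) = f x * f y" and ff: "\<And>x. f (f x) = x"
    and fw: "\<And>A. f (w A) = w A" and w2: "\<And>A. w A * w A = 1"
  shows "tw w f (tw w f M) = M"
  unfolding tw_def by (rule ext) (simp add: fmul ff fw mult.assoc[symmetric] w2)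

lemma tw_zero: "f 0 = 0 \<Longrightarrow> tw w f (\<lambda>_. 0) = (\<lambda>_. 0)"
  unfolding tw_def by simp

lemma hat_tw:
  assumes M: "M \<in> cl_elems p q"
  shows "cl_hat p q M = tw (\<lambda>A. (-1) ^ card A) (\<lambda>x. x) M"
proof (rule ext)
  fix B
  show "cl_hat p q M B = tw (\<lambda>A. (-1) ^ card A) (\<lambda>x. x) M B"
  proof (cases "B \<subseteq> {..<p+q}")
    case True
    then have "card B \<le> p + q" using card_mono[of "{..<p+q}" B] by simp
    then have "cl_hat p q M B = (\<Sum>k\<le>p+q. if k = card B then (-1) ^ card B * M B else 0)"
      unfolding cl_hat_def cl_scale_def cl_grade_def by (intro sum.cong refl) auto
    also have "\<dots> = (-1) ^ card B * M B" using \<open>card B \<le> p + q\<close> by (subst sum.delta) auto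
    finally show ?thesis unfolding tw_def by simp
  next
    case False
    then show ?thesis using elems_out[OF M False] unfolding cl_hat_def cl_scale_def cl_grade_def tw_def by simp
  qed
qed

lemma rev_tw:
  assumes M: "M \<in> cl_elems p q"
  shows "cl_rev p q M = tw (\<lambda>A. (-1) ^ (card A * (card A - 1) div 2)) (\<lambda>x. x) M"
proof (rule ext)
  fix B
  show "cl_rev p q M B = tw (\<lambda>A. (-1) ^ (card A * (card A - 1) div 2)) (\<lambda>x. x) M B"
  proof (cases "B \<subseteq> {..<p+q}")
    case True
    then have "card B \<le> p + q" using card_mono[of "{..<p+q}" B] by simp
    then have "cl_rev p q M B = (\<Sum>k\<le>p+q. if k = card B then (-1) ^ (card B * (card B - 1) div 2) * M B else 0)"
      unfolding cl_rev_def cl_scale_def cl_grade_def by (intro sum.cong refl) auto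
    also have "\<dots> = (-1) ^ (card B * (card B - 1) div 2) * M B" using \<open>card B \<le> p + q\<close> by (subst sum.delta) auto
    finally show ?thesis unfolding tw_def by simp
  next
    case False
    then show ?thesis using elems_out[OF M False] unfolding cl_rev_def cl_scale_def cl_grade_def tw_def by simp
  qed
qed

lemma conj_tw: "cl_conj M = tw (\<lambda>A. 1) cnj M"
  unfolding cl_conj_def tw_def by simp

lemma hat_mult: "cl_mult p q (tw (\<lambda>A. (-1) ^ card A) (\<lambda>x. x) M) (tw (\<lambda>A. (-1) ^ card A) (\<lambda>x. x) N)
    = tw (\<lambda>A. (-1) ^ card A) (\<lambda>x. x) (cl_mult p q M N)"
  by (rule tw_auto) (auto intro!: hat_parity dest: finite_subset)

lemma rev_mult: "cl_mult p q (tw (\<lambda>A. (-1) ^ (card A * (card A - 1) div 2)) (\<lambda>x. x) N) (tw (\<lambda>A. (-1) ^ (card A * (card A - 1) div 2)) (\<lambda>x. x) M)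
    = tw (\<lambda>A. (-1) ^ (card A * (card A - 1) div 2)) (\<lambda>x. x) (cl_mult p q M N)"
proof (rule tw_anti)
  fix A B :: "nat set" assume A: "A \<subseteq> {..<p+q}" and B: "B \<subseteq> {..<p+q}"
  have fA: "finite A" and fB: "finite B" using A B finite_subset by auto
  show "cl_sign p B A * (-1) ^ (card A * (card A - 1) div 2) * (-1) ^ (card B * (card B - 1) div 2) =
    (-1) ^ (card ((A - B) \<union> (B - A)) * (card ((A - B) \<union> (B - A)) - 1) div 2) * cl_sign p A B"
    using rev_sign_identity[OF fA fB, of p] by simp
qed auto

lemma conj_mult: "cl_mult p q (tw (\<lambda>A. 1) cnj M) (tw (\<lambda>A. 1) cnj N) = tw (\<lambda>A. 1) cnj (cl_mult p q M N)"
  by (rule tw_auto) (auto simp: cnj_sign)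

lemma dag_mult: "cl_mult p q (tw (\<lambda>A. cl_sign p A A) cnj N) (tw (\<lambda>A. cl_sign p A A) cnj M)
    = tw (\<lambda>A. cl_sign p A A) cnj (cl_mult p q M N)"
proof (rule tw_anti)
  fix A B :: "nat set" assume A: "A \<subseteq> {..<p+q}" and B: "B \<subseteq> {..<p+q}"
  have fA: "finite A" and fB: "finite B" using A B finite_subset by auto
  show "cl_sign p B A * cl_sign p A A * cl_sign p B B = cl_sign p ((A - B) \<union> (B - A)) ((A - B) \<union> (B - A)) * cl_sign p A B"
    by (rule dag_sign_identity[OF fA fB])
qed (auto simp: cnj_sign)

lemma hat_invol: "tw (\<lambda>A. (-1) ^ card A) (\<lambda>x. x) (tw (\<lambda>A. (-1) ^ card A) (\<lambda>x. x) M) = M"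
  by (rule tw_invol) (auto simp: power_add[symmetric])

lemma rev_invol: "tw (\<lambda>A. (-1) ^ (card A * (card A - 1) div 2)) (\<lambda>x. x) (tw (\<lambda>A. (-1) ^ (card A * (card A - 1) div 2)) (\<lambda>x. x) M) = M"
  by (rule tw_invol) (auto simp: power_add[symmetric])

lemma conj_invol: "tw (\<lambda>A. 1) cnj (tw (\<lambda>A. 1) cnj M) = M"
  by (rule tw_invol) auto

lemma dag_invol: "tw (\<lambda>A. cl_sign p A A) cnj (tw (\<lambda>A. cl_sign p A A) cnj M) = M"
  by (rule tw_invol) (auto simp: cnj_sign sign_sq)

lemma cl_mult_basis_left:
  assumes A: "A \<subseteq> {..<p+q}"
  shows "cl_mult p q (cl_basis A) N C = (if C \<subseteq> {..<p+q} then cl_sign p A ((A - C) \<union> (C - A)) * N ((A - C) \<union> (C - A)) else 0)"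
proof (cases "C \<subseteq> {..<p+q}")
  case True
  have "cl_mult p q (cl_basis A) N C = (\<Sum>A'\<in>Pow {..<p+q}. cl_sign p A' ((A' - C) \<union> (C - A')) * cl_basis A A' * N ((A' - C) \<union> (C - A')))"
    using True by (simp add: cl_mult_alt[of p q _ N C])
  also have "\<dots> = (\<Sum>A'\<in>Pow {..<p+q}. if A' = A then cl_sign p A' ((A' - C) \<union> (C - A')) * N ((A' - C) \<union> (C - A')) else 0)"
    by (intro sum.cong refl) (auto simp: cl_basis_def)
  also have "\<dots> = cl_sign p A ((A - C) \<union> (C - A)) * N ((A - C) \<union> (C - A))"
    using A by (subst sum.delta) auto
  finally show ?thesis using True by simp
qed (simp add: cl_mult_def)

lemma cl_mult_scale_left: "cl_mult p q (cl_scale s M) N = cl_scale s (cl_mult p q M N)"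
  unfolding cl_mult_def cl_scale_def by (rule ext) (simp add: sum_distrib_left algebra_simps if_distrib cong: if_cong)

lemma basis_inv_right:
  assumes A: "A \<subseteq> {..<p+q}"
  shows "cl_mult p q (cl_basis A) (cl_scale (cl_sign p A A) (cl_basis A)) = cl_one"
proof (rule ext)
  fix C
  have e: "((A - C) \<union> (C - A) = A) = (C = {})" by blast
  show "cl_mult p q (cl_basis A) (cl_scale (cl_sign p A A) (cl_basis A)) C = cl_one C"
    unfolding cl_mult_basis_left[OF A] unfolding cl_one_def cl_basis_def cl_scale_def
    using e sign_sq[of p A A] by auto
qed

lemma basis_inv_left:
  assumes A: "A \<subseteq> {..<p+q}"
  shows "cl_mult p q (cl_scale (cl_sign p A A) (cl_basis A)) (cl_basis A) = cl_one"
proof (rule ext)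
  fix C
  have e: "((A - C) \<union> (C - A) = A) = (C = {})" by blast
  show "cl_mult p q (cl_scale (cl_sign p A A) (cl_basis A)) (cl_basis A) C = cl_one C"
    unfolding cl_mult_scale_left unfolding cl_scale_def unfolding cl_mult_basis_left[OF A]
    unfolding cl_one_def cl_basis_def
    using e sign_sq[of p A A] by auto
qed

lemma scaled_basis_elems: "A \<subseteq> {..<p+q} \<Longrightarrow> cl_scale s (cl_basis A) \<in> cl_elems p q"
  unfolding cl_elems_def cl_scale_def cl_basis_def by auto

lemma cnj_mult_self: "cnj z * z = complex_of_real ((Re z)\<^sup>2 + (Im z)\<^sup>2)"
  using complex_mult_cnj[of z] by (simp add: mult.commute)

lemma dag_pos:
  assumes M: "M \<in> cl_elems p q"
    and Z: "cl_mult p q (tw (\<lambda>A. cl_sign p A A) cnj M) M = (\<lambda>_. 0)"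
  shows "M = (\<lambda>_. 0)"
proof -
  have "cl_mult p q (tw (\<lambda>A. cl_sign p A A) cnj M) M {} = 0" using Z by simp
  then have "(\<Sum>A\<in>Pow {..<p+q}. cl_sign p A A * (cl_sign p A A * cnj (M A)) * M A) = 0"
    unfolding cl_mult_alt[of p q _ M "{}"] tw_def by simp
  moreover have "\<And>A. cl_sign p A A * (cl_sign p A A * cnj (M A)) * M A = complex_of_real ((Re (M A))\<^sup>2 + (Im (M A))\<^sup>2)"
    using sign_sq by (simp add: mult.assoc[symmetric] cnj_mult_self)
  ultimately have "complex_of_real (\<Sum>A\<in>Pow {..<p+q}. (Re (M A))\<^sup>2 + (Im (M A))\<^sup>2) = 0" by simp
  then have s0: "(\<Sum>A\<in>Pow {..<p+q}. (Re (M A))\<^sup>2 + (Im (M A))\<^sup>2) = 0" by (simp only: of_real_eq_0_iff)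
  have "\<forall>A\<in>Pow {..<p+q}. (Re (M A))\<^sup>2 + (Im (M A))\<^sup>2 = 0"
    using sum_nonneg_eq_0_iff[of "Pow {..<p+q}" "\<lambda>A. (Re (M A))\<^sup>2 + (Im (M A))\<^sup>2"] s0 by simp
  then have "\<forall>A\<in>Pow {..<p+q}. M A = 0" by (auto intro: complex_eqI simp: add_nonneg_eq_0_iff)
  then show ?thesis using elems_out[OF M] by (auto intro!: ext)
qed


lemma target_bdc:
  assumes n: "1 \<le> n"
  shows "cl_target n = bdc (2 ^ ((n + 1) div 2)) (if even n then 2 ^ ((n + 1) div 2) else 2 ^ ((n + 1) div 2) div 2)"
proof (cases "even n")
  case True
  define N :: nat where "N = 2 ^ ((n + 1) div 2)"
  have "cl_target n = carrier_mat N N" unfolding cl_target_def Let_def N_def using True by simp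
  also have "\<dots> = bdc N N" unfolding bdc_def by auto
  finally show ?thesis using True N_def by simp
next
  case False
  define N :: nat where "N = 2 ^ ((n + 1) div 2)"
  define h where "h = N div 2"
  have "(n + 1) div 2 \<ge> 1" using n by simp
  then have Nh: "N = h + h" unfolding N_def h_def
    by (metis One_nat_def add_self_div_2 le_add_diff_inverse mult_2 power_add power_one_right)
  have "cl_target n = {four_block_mat X (0\<^sub>m h h) (0\<^sub>m h h) Y | X Y. X \<in> carrier_mat h h \<and> Y \<in> carrier_mat h h}"
    unfolding cl_target_def Let_def N_def h_def using False by simp
  also have "\<dots> = bdc N h"
  proof (rule equalityI; rule subsetI)
    fix Z :: "complex mat" assume "Z \<in> {four_block_mat X (0\<^sub>m h h) (0\<^sub>m h h) Y | X Y. X \<in> carrier_mat h h \<and> Y \<in> carrier_mat h h}"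
    then obtain X Y where XY: "X \<in> carrier_mat h h" "Y \<in> carrier_mat h h" "Z = four_block_mat X (0\<^sub>m h h) (0\<^sub>m h h) Y"
      by blast
    show "Z \<in> bdc N h"
    proof (rule bdcI)
      show "Z \<in> carrier_mat N N" using XY Nh by simp
      fix i j assume "i < N" "j < N" "(h \<le> i) \<noteq> (h \<le> j)"
      then show "Z $$ (i, j) = 0" using XY Nh by auto
    qed
  next
    fix Z :: "complex mat" assume Z: "Z \<in> bdc N h"
    define X where "X = mat h h (\<lambda>(i,j). Z $$ (i,j))"
    define Y where "Y = mat h h (\<lambda>(i,j). Z $$ (i + h, j + h))"
    have "Z = four_block_mat X (0\<^sub>m h h) (0\<^sub>m h h) Y"
    proof (rule eq_matI)
      fix i j assume ij: "i < dim_row (four_block_mat X (0\<^sub>m h h) (0\<^sub>m h h) Y)" "j < dim_col (four_block_mat X (0\<^sub>m h h) (0\<^sub>m h h) Y)"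
      then have i: "i < N" and j: "j < N" unfolding X_def Y_def using Nh by auto
      show "Z $$ (i, j) = four_block_mat X (0\<^sub>m h h) (0\<^sub>m h h) Y $$ (i, j)"
        using i j Nh bdc_off[OF Z i j] unfolding X_def Y_def by auto
    qed (use Z Nh X_def Y_def in auto)
    moreover have "X \<in> carrier_mat h h" "Y \<in> carrier_mat h h" unfolding X_def Y_def by auto
    ultimately show "Z \<in> {four_block_mat X (0\<^sub>m h h) (0\<^sub>m h h) Y | X Y. X \<in> carrier_mat h h \<and> Y \<in> carrier_mat h h}"
      by blast
  qed
  finally show ?thesis using False N_def h_def by simp
qed

locale clctx =
  fixes p q :: nat and \<beta> :: "cl \<Rightarrow> complex mat"
  assumes n1: "1 \<le> p + q" and iso: "cl_iso p q \<beta>"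
begin

abbreviation "U \<equiv> cl_elems p q"
definition "NN = (2::nat) ^ ((p + q + 1) div 2)"
definition "cc = (if even (p + q) then NN else NN div 2)"
abbreviation "T \<equiv> bdc NN cc"
definition "\<gamma> = inv_into U \<beta>"

lemma T_eq: "cl_target (p + q) = T"
  unfolding NN_def cc_def using target_bdc[OF n1] by simp

lemma bij: "bij_betw \<beta> U T" using iso T_eq unfolding cl_iso_def by simp
lemma inj: "inj_on \<beta> U" using bij bij_betw_def by blast
lemma beta_T: "M \<in> U \<Longrightarrow> \<beta> M \<in> T" using bij bij_betwE by blast
lemma beta_mult: "M \<in> U \<Longrightarrow> N \<in> U \<Longrightarrow> \<beta> (cl_mult p q M N) = \<beta> M * \<beta> N"
  using iso unfolding cl_iso_def by blast
lemma beta_one: "\<beta> cl_one = 1\<^sub>m NN" using iso unfolding cl_iso_def NN_def by blast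
lemma beta_scale: "M \<in> U \<Longrightarrow> \<beta> (cl_scale c M) = c \<cdot>\<^sub>m \<beta> M" using iso unfolding cl_iso_def by blast

lemma zero_U: "(\<lambda>_. 0) \<in> U" unfolding cl_elems_def by simp

lemma beta_zero: "\<beta> (\<lambda>_. 0) = 0\<^sub>m NN NN"
proof -
  have "cl_scale 0 (\<lambda>_. 0) = (\<lambda>_. 0)" unfolding cl_scale_def by simp
  then have "\<beta> (\<lambda>_. 0) = 0 \<cdot>\<^sub>m \<beta> (\<lambda>_. 0)" using beta_scale[OF zero_U, of 0] by simp
  also have "\<dots> = 0\<^sub>m NN NN" using beta_T[OF zero_U] by (intro eq_matI) auto
  finally show ?thesis .
qed

lemma gamma_U: "X \<in> T \<Longrightarrow> \<gamma> X \<in> U"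
  unfolding \<gamma>_def using bij by (metis bij_betw_def inv_into_into)
lemma beta_gamma: "X \<in> T \<Longrightarrow> \<beta> (\<gamma> X) = X"
  unfolding \<gamma>_def using bij by (metis bij_betw_def f_inv_into_f)
lemma gamma_beta: "M \<in> U \<Longrightarrow> \<gamma> (\<beta> M) = M"
  unfolding \<gamma>_def using inj by (rule inv_into_f_f)

lemma beta_eq_zero: "M \<in> U \<Longrightarrow> \<beta> M = 0\<^sub>m NN NN \<Longrightarrow> M = (\<lambda>_. 0)"
  using inj zero_U beta_zero by (metis inj_on_def)

lemma cmat_rank_T: "X \<in> T \<Longrightarrow> cmat_rank X = vec_space.rank NN X"
  unfolding cmat_rank_def by simp

lemma rank_le_transport:
  assumes phiU: "\<And>M. M \<in> U \<Longrightarrow> \<phi> M \<in> U"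
    and phi0: "\<phi> (\<lambda>_. 0) = (\<lambda>_. 0)"
    and phiinv: "\<And>M. M \<in> U \<Longrightarrow> \<phi> (\<phi> M) = M"
    and mul: "(\<forall>M\<in>U. \<forall>N\<in>U. \<phi> (cl_mult p q M N) = cl_mult p q (\<phi> M) (\<phi> N)) \<or>
              (\<forall>M\<in>U. \<forall>N\<in>U. \<phi> (cl_mult p q M N) = cl_mult p q (\<phi> N) (\<phi> M))"
    and M: "M \<in> U"
  shows "cmat_rank (\<beta> M) \<le> cmat_rank (\<beta> (\<phi> M))"
proof -
  define \<psi> where "\<psi> X = \<beta> (\<phi> (\<gamma> X))" for X
  have clos: "\<And>X. X \<in> T \<Longrightarrow> \<psi> X \<in> T" unfolding \<psi>_def using beta_T phiU gamma_U by blast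
  have gm: "\<gamma> (X * Y) = cl_mult p q (\<gamma> X) (\<gamma> Y)" if X: "X \<in> T" and Y: "Y \<in> T" for X Y
  proof -
    have "\<beta> (cl_mult p q (\<gamma> X) (\<gamma> Y)) = X * Y" using beta_mult[OF gamma_U[OF X] gamma_U[OF Y]] beta_gamma X Y by simp
    then show ?thesis using gamma_beta[OF cl_mult_in] by metis
  qed
  have z: "\<psi> (0\<^sub>m NN NN) = 0\<^sub>m NN NN"
    unfolding \<psi>_def using gamma_beta[OF zero_U] beta_zero phi0 by metis
  have inj0: "X = 0\<^sub>m NN NN" if X: "X \<in> T" and "\<psi> X = 0\<^sub>m NN NN" for X
  proof -
    have "\<phi> (\<gamma> X) = (\<lambda>_. 0)" using beta_eq_zero[OF phiU[OF gamma_U[OF X]]] that unfolding \<psi>_def by simp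
    then have "\<gamma> X = (\<lambda>_. 0)" using phiinv[OF gamma_U[OF X]] phi0 by metis
    then show ?thesis using beta_gamma[OF X] beta_zero by metis
  qed
  have bM: "\<beta> M \<in> T" using beta_T[OF M] .
  have psiM: "\<psi> (\<beta> M) = \<beta> (\<phi> M)" unfolding \<psi>_def using gamma_beta[OF M] by simp
  from mul have "vec_space.rank NN (\<beta> M) \<le> vec_space.rank NN (\<psi> (\<beta> M))"
  proof
    assume h: "\<forall>M\<in>U. \<forall>N\<in>U. \<phi> (cl_mult p q M N) = cl_mult p q (\<phi> M) (\<phi> N)"
    have mult: "\<psi> (X * Y) = \<psi> X * \<psi> Y" if X: "X \<in> T" and Y: "Y \<in> T" for X Y
      unfolding \<psi>_def gm[OF X Y] using h gamma_U[OF X] gamma_U[OF Y] beta_mult phiU by simp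
    show ?thesis by (rule rank_le_hom[OF clos mult z inj0 bM])
  next
    assume h: "\<forall>M\<in>U. \<forall>N\<in>U. \<phi> (cl_mult p q M N) = cl_mult p q (\<phi> N) (\<phi> M)"
    have mult: "\<psi> (X * Y) = \<psi> Y * \<psi> X" if X: "X \<in> T" and Y: "Y \<in> T" for X Y
      unfolding \<psi>_def gm[OF X Y] using h gamma_U[OF X] gamma_U[OF Y] beta_mult phiU by simp
    show ?thesis by (rule rank_le_antihom[OF clos mult z inj0 bM])
  qed
  then show ?thesis unfolding psiM using cmat_rank_T bM beta_T[OF phiU[OF M]] by simp
qed

lemma rank_eq_transport:
  assumes phiU: "\<And>M. M \<in> U \<Longrightarrow> \<phi> M \<in> U"
    and phi0: "\<phi> (\<lambda>_. 0) = (\<lambda>_. 0)"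
    and phiinv: "\<And>M. M \<in> U \<Longrightarrow> \<phi> (\<phi> M) = M"
    and mul: "(\<forall>M\<in>U. \<forall>N\<in>U. \<phi> (cl_mult p q M N) = cl_mult p q (\<phi> M) (\<phi> N)) \<or>
              (\<forall>M\<in>U. \<forall>N\<in>U. \<phi> (cl_mult p q M N) = cl_mult p q (\<phi> N) (\<phi> M))"
    and M: "M \<in> U"
  shows "cmat_rank (\<beta> M) = cmat_rank (\<beta> (\<phi> M))"
  using rank_le_transport[OF phiU phi0 phiinv mul M] rank_le_transport[OF phiU phi0 phiinv mul phiU[OF M]]
    phiinv[OF M] by simp

lemma basis_U: "A \<subseteq> {..<p+q} \<Longrightarrow> cl_basis A \<in> U"
  unfolding cl_elems_def cl_basis_def by auto

lemma one_U: "cl_one \<in> U" unfolding cl_one_def using basis_U by simp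

lemma inv_basis:
  assumes A: "A \<subseteq> {..<p+q}"
  shows "cl_inv p q (cl_basis A) = cl_scale (cl_sign p A A) (cl_basis A)"
  unfolding cl_inv_def
proof (rule the_equality)
  show "cl_scale (cl_sign p A A) (cl_basis A) \<in> U \<and>
    cl_mult p q (cl_basis A) (cl_scale (cl_sign p A A) (cl_basis A)) = cl_one \<and>
    cl_mult p q (cl_scale (cl_sign p A A) (cl_basis A)) (cl_basis A) = cl_one"
    using scaled_basis_elems[OF A] basis_inv_right[OF A] basis_inv_left[OF A] by blast
  fix Y assume Y: "Y \<in> U \<and> cl_mult p q (cl_basis A) Y = cl_one \<and> cl_mult p q Y (cl_basis A) = cl_one"
  define Y0 where "Y0 = cl_scale (cl_sign p A A) (cl_basis A)"
  have Y0: "Y0 \<in> U" unfolding Y0_def by (rule scaled_basis_elems[OF A])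
  have B: "cl_basis A \<in> U" by (rule basis_U[OF A])
  have c: "\<And>M. M \<in> U \<Longrightarrow> \<beta> M \<in> carrier_mat NN NN" using beta_T bdc_carrier by blast
  have "\<beta> Y = \<beta> Y * 1\<^sub>m NN" using c[of Y] Y by simp
  also have "\<dots> = \<beta> Y * (\<beta> (cl_basis A) * \<beta> Y0)"
    using beta_mult[OF B Y0] basis_inv_right[OF A] beta_one Y0_def by simp
  also have "\<dots> = (\<beta> Y * \<beta> (cl_basis A)) * \<beta> Y0"
    using c[of Y] c[OF B] c[OF Y0] Y by simp
  also have "\<beta> Y * \<beta> (cl_basis A) = 1\<^sub>m NN"
    using beta_mult[of Y "cl_basis A"] Y B beta_one by simp
  also have "1\<^sub>m NN * \<beta> Y0 = \<beta> Y0" using c[OF Y0] by simp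
  finally have "\<beta> Y = \<beta> Y0" .
  then show "Y = Y0" using inj Y Y0 by (meson inj_on_def)
qed

lemma dagger_tw:
  assumes M: "M \<in> U"
  shows "cl_dagger p q M = tw (\<lambda>A. cl_sign p A A) cnj M"
proof (rule ext)
  fix B
  have "cl_dagger p q M B = (\<Sum>A\<in>Pow {..<p+q}. if A = B then cnj (M A) * cl_sign p A A else 0)"
    unfolding cl_dagger_def
  proof (intro sum.cong refl)
    fix A assume A: "A \<in> Pow {..<p+q}"
    have e: "cl_inv p q (cl_basis A) = cl_scale (cl_sign p A A) (cl_basis A)" by (rule inv_basis) (use A in simp)
    show "cl_scale (cnj (M A)) (cl_inv p q (cl_basis A)) B = (if A = B then cnj (M A) * cl_sign p A A else 0)"
      unfolding e unfolding cl_scale_def cl_basis_def by auto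
  qed
  also have "\<dots> = (if B \<subseteq> {..<p+q} then cnj (M B) * cl_sign p B B else 0)"
    by (subst sum.delta) auto
  also have "\<dots> = tw (\<lambda>A. cl_sign p A A) cnj M B"
    unfolding tw_def using elems_out[OF M] by (auto simp: mult.commute)
  finally show "cl_dagger p q M B = tw (\<lambda>A. cl_sign p A A) cnj M B" .
qed

abbreviation "dg \<equiv> tw (\<lambda>A. cl_sign p A A) cnj"

lemma dg_U: "M \<in> U \<Longrightarrow> dg M \<in> U" by (rule tw_elems) auto

lemma dg_rank: "M \<in> U \<Longrightarrow> cmat_rank (\<beta> M) = cmat_rank (\<beta> (dg M))"
  by (rule rank_eq_transport[OF dg_U tw_zero dag_invol]) (auto simp: dag_mult)

lemma dgM_rank:
  assumes M: "M \<in> U"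
  shows "cmat_rank (\<beta> (cl_mult p q (dg M) M)) = cmat_rank (\<beta> M)"
proof -
  have c: "\<And>M. M \<in> U \<Longrightarrow> \<beta> M \<in> carrier_mat NN NN" using beta_T bdc_carrier by blast
  define A where "A = \<beta> (cl_mult p q (dg M) M)"
  define B where "B = \<beta> M"
  define D where "D = \<beta> (dg M)"
  have AT: "A \<in> T" unfolding A_def using beta_T cl_mult_in by blast
  have BT: "B \<in> T" unfolding B_def using beta_T[OF M] .
  have DT: "D \<in> T" unfolding D_def using beta_T[OF dg_U[OF M]] .
  have ADB: "A = D * B" unfolding A_def D_def B_def using beta_mult[OF dg_U[OF M] M] .
  have le1: "vec_space.rank NN A \<le> vec_space.rank NN D" unfolding ADB by (rule rank_mult_le[OF DT BT])
  have ker: "B * Z = 0\<^sub>m NN NN" if Z: "Z \<in> T" and AZ: "A * Z = 0\<^sub>m NN NN" for Z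
  proof -
    define Y where "Y = \<gamma> Z"
    have Y: "Y \<in> U" unfolding Y_def using gamma_U[OF Z] .
    have bY: "\<beta> Y = Z" unfolding Y_def using beta_gamma[OF Z] .
    define MY where "MY = cl_mult p q M Y"
    have MY: "MY \<in> U" unfolding MY_def by (rule cl_mult_in)
    have bMY: "\<beta> MY = B * Z" unfolding MY_def B_def using beta_mult[OF M Y] bY by simp
    have "dg MY = cl_mult p q (dg Y) (dg M)" unfolding MY_def using dag_mult by simp
    then have "\<beta> (dg MY) = \<beta> (dg Y) * D" unfolding D_def using beta_mult[OF dg_U[OF Y] dg_U[OF M]] by simp
    then have "\<beta> (cl_mult p q (dg MY) MY) = (\<beta> (dg Y) * D) * (B * Z)"
      using beta_mult[OF dg_U[OF MY] MY] bMY by simp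
    also have "\<dots> = \<beta> (dg Y) * ((D * B) * Z)"
      using assoc_mult_mat[OF c[OF dg_U[OF Y]] bdc_carrier[OF DT] mult_carrier_mat[OF bdc_carrier[OF BT] bdc_carrier[OF Z]]]
        assoc_mult_mat[OF bdc_carrier[OF DT] bdc_carrier[OF BT] bdc_carrier[OF Z]] by simp
    also have "\<dots> = 0\<^sub>m NN NN" using ADB AZ c[OF dg_U[OF Y]] by simp
    finally have "cl_mult p q (dg MY) MY = (\<lambda>_. 0)" using beta_eq_zero[OF cl_mult_in] by blast
    then have "MY = (\<lambda>_. 0)" using dag_pos[OF MY] by blast
    then show ?thesis using bMY beta_zero by simp
  qed
  have le2: "vec_space.rank NN B \<le> vec_space.rank NN A" by (rule kernel_rank[OF AT BT ker])
  have "cmat_rank D = cmat_rank B" unfolding D_def B_def using dg_rank[OF M] by simp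
  then show ?thesis using le1 le2 cmat_rank_T[OF AT] cmat_rank_T[OF BT] cmat_rank_T[OF DT]
    unfolding A_def[symmetric] B_def[symmetric] by simp
qed

end


theorem theorem3:
  fixes p q :: nat and M :: cl and \<beta> :: "cl \<Rightarrow> complex mat"
  assumes "p + q \<ge> 1"
    and "cl_iso p q \<beta>"
    and "M \<in> cl_elems p q"
  shows "cmat_rank (\<beta> M) = cmat_rank (\<beta> (cl_hat p q M))
       \<and> cmat_rank (\<beta> M) = cmat_rank (\<beta> (cl_rev p q M))
       \<and> cmat_rank (\<beta> M) = cmat_rank (\<beta> (cl_conj M))
       \<and> cmat_rank (\<beta> M) = cmat_rank (\<beta> (cl_dagger p q M))
       \<and> cmat_rank (\<beta> M) = cmat_rank (\<beta> (cl_mult p q (cl_dagger p q M) M))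
       \<and> cmat_rank (\<beta> M) = cmat_rank (\<beta> (cl_mult p q M (cl_dagger p q M)))"
proof -
  interpret clctx p q \<beta> using assms(1,2) by unfold_locales
  have M: "M \<in> cl_elems p q" by fact
  have h: "cmat_rank (\<beta> M) = cmat_rank (\<beta> (cl_hat p q M))"
  proof -
    let ?f = "tw (\<lambda>A. (-1) ^ card A) (\<lambda>x. x)"
    have U1: "\<And>M. M \<in> U \<Longrightarrow> ?f M \<in> U" by (rule tw_elems) auto
    have z1: "?f (\<lambda>_. 0) = (\<lambda>_. 0)" by (rule tw_zero) simp
    have m1: "(\<forall>M\<in>U. \<forall>N\<in>U. ?f (cl_mult p q M N) = cl_mult p q (?f M) (?f N)) \<or>
              (\<forall>M\<in>U. \<forall>N\<in>U. ?f (cl_mult p q M N) = cl_mult p q (?f N) (?f M))"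
      by (intro disjI1 ballI) (rule hat_mult[symmetric])
    show ?thesis unfolding hat_tw[OF M] by (rule rank_eq_transport[OF U1 z1 hat_invol m1 M])
  qed
  have r: "cmat_rank (\<beta> M) = cmat_rank (\<beta> (cl_rev p q M))"
  proof -
    let ?f = "tw (\<lambda>A. (-1) ^ (card A * (card A - 1) div 2)) (\<lambda>x. x)"
    have U1: "\<And>M. M \<in> U \<Longrightarrow> ?f M \<in> U" by (rule tw_elems) auto
    have z1: "?f (\<lambda>_. 0) = (\<lambda>_. 0)" by (rule tw_zero) simp
    have m1: "(\<forall>M\<in>U. \<forall>N\<in>U. ?f (cl_mult p q M N) = cl_mult p q (?f M) (?f N)) \<or>
              (\<forall>M\<in>U. \<forall>N\<in>U. ?f (cl_mult p q M N) = cl_mult p q (?f N) (?f M))"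
      by (intro disjI2 ballI) (rule rev_mult[symmetric])
    show ?thesis unfolding rev_tw[OF M] by (rule rank_eq_transport[OF U1 z1 rev_invol m1 M])
  qed
  have c: "cmat_rank (\<beta> M) = cmat_rank (\<beta> (cl_conj M))"
  proof -
    let ?f = "tw (\<lambda>A. 1) cnj"
    have U1: "\<And>M. M \<in> U \<Longrightarrow> ?f M \<in> U" by (rule tw_elems) auto
    have z1: "?f (\<lambda>_. 0) = (\<lambda>_. 0)" by (rule tw_zero) simp
    have m1: "(\<forall>M\<in>U. \<forall>N\<in>U. ?f (cl_mult p q M N) = cl_mult p q (?f M) (?f N)) \<or>
              (\<forall>M\<in>U. \<forall>N\<in>U. ?f (cl_mult p q M N) = cl_mult p q (?f N) (?f M))"
      by (intro disjI1 ballI) (rule conj_mult[symmetric])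
    show ?thesis unfolding conj_tw by (rule rank_eq_transport[OF U1 z1 conj_invol m1 M])
  qed
  have d: "cmat_rank (\<beta> M) = cmat_rank (\<beta> (cl_dagger p q M))"
    unfolding dagger_tw[OF M] by (rule dg_rank[OF M])
  have dm: "cmat_rank (\<beta> M) = cmat_rank (\<beta> (cl_mult p q (cl_dagger p q M) M))"
    unfolding dagger_tw[OF M] using dgM_rank[OF M] by simp
  have md: "cmat_rank (\<beta> M) = cmat_rank (\<beta> (cl_mult p q M (cl_dagger p q M)))"
  proof -
    have "cl_mult p q M (cl_dagger p q M) = cl_mult p q (dg (dg M)) (dg M)"
      unfolding dagger_tw[OF M] dag_invol ..
    then show ?thesis using dgM_rank[OF dg_U[OF M]] dg_rank[OF M] by simp
  qed
  show ?thesis using h r c d dm md by blast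
qed


end
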